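(* Let $3\le n<\omega$ and let $M\le_{\mathbf{K}^n}N$ be models of $\mathbf{K}^n$ of cardinality at most $\aleph_{n-3}$. Let $M^*$ be the standard model on $I(M)$ and $N^*$ the standard model on $I(N)$. Then there is an isomorphism $f:N\cong N^*$ which is the identity on $I(N)$ and which restricts to an isomorphism $M\cong M^*$ (the identity on $I(M)$).
   Context: Hart–Shelah class $\mathbf{K}^n$ ($n\ge2$): models $M$ with sorts $I(M)$ (index set), $K(M)=[I(M)]^n$ with membership, $H\cong\mathbb{Z}_2$, $G(M)=\bigoplus_{u\in K}\mathbb{Z}_2$ with evaluation and support functions, $G^*(M)$ with projection onto $K$ and a regular $G$-action on each stalk $G^*_u$, $H^*(M)$ with projection onto $K$ and a regular $\mathbb{Z}_2$-action on each stalk, and $Q\subseteq(G^* )^n\times H^*$ symmetric in the first $n$ arguments, holding only on compatible stalk indices (all $n$-subsets of one $(n+1)$-subset of $I$), such that moving $x_\ell$ by $\gamma_\ell\in G$ and $y\in H^*_v$ by $m\in\mathbb{Z}_2$ preserves the truth value of $Q$ iff $\gamma_1(v)+\dots+\gamma_n(v)+m\equiv0\pmod2$. It is $\mathbb{L}_{\omega_1,\omega}$-axiomatizable and ordered by $\mathbb{L}_{\omega_1,\omega}$-elementary substructure $\le_{\mathbf{K}^n}$. For an index set $I$, the standard model for $I$ is the unique $M\in\mathbf{K}^n$ with $I(M)=I$ such that $G^*(M)=K\times G$ where $K=[I]^n$ and $G=\bigoplus_{u\in K}\mathbb{Z}_2$ (i.e. each stalk $G^*_u$ is literally $\{u\}\times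 G$ with $G$ acting by translation). *)

theory Defs
  imports Main "HOL-Library.FuncSet" "HOL-Library.Multiset"
begin

record ('a, 'r) rstr =
  univ :: "'a set"
  rel  :: "'r \<Rightarrow> 'a list \<Rightarrow> bool"

text \<open>Formulas of L_{omega_1,omega} over a relational vocabulary 'r (with equality):
  variables are natural numbers, conjunctions are countable (indexed by nat).\<close>
datatype 'r fm =
    FEq nat nat
  | FRel 'r "nat list"
  | FNeg "'r fm"
  | FConj "nat \<Rightarrow> 'r fm"
  | FEx nat "'r fm"

primrec fv :: "'r fm \<Rightarrow> nat set" where
  "fv (FEq i j) = {i, j}"
| "fv (FRel r vs) = set vs"
| "fv (FNeg \<phi>) = fv \<phi>"
| "fv (FConj F) = (\<Union>k. fv (F k))"
| "fv (FEx x \<phi>) = fv \<phi> - {x}"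

primrec wf_fm :: "'r fm \<Rightarrow> bool" where
  "wf_fm (FEq i j) = True"
| "wf_fm (FRel r vs) = True"
| "wf_fm (FNeg \<phi>) = wf_fm \<phi>"
| "wf_fm (FConj F) = ((\<forall>k. wf_fm (F k)) \<and> finite (\<Union>k. fv (F k)))"
| "wf_fm (FEx x \<phi>) = wf_fm \<phi>"

primrec sat :: "('a, 'r) rstr \<Rightarrow> 'r fm \<Rightarrow> (nat \<Rightarrow> 'a) \<Rightarrow> bool" where
  "sat M (FEq i j) s = (s i = s j)"
| "sat M (FRel r vs) s = rel M r (map s vs)"
| "sat M (FNeg \<phi>) s = (\<not> sat M \<phi> s)"
| "sat M (FConj F) s = (\<forall>k. sat M (F k) s)"
| "sat M (FEx x \<phi>) s = (\<exists>a\<in>univ M. sat M \<phi> (s(x := a)))"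

definition elem_sub :: "('a, 'r) rstr \<Rightarrow> ('a, 'r) rstr \<Rightarrow> bool" where
  "elem_sub M N \<longleftrightarrow> univ M \<subseteq> univ N \<and>
     (\<forall>\<phi> s. wf_fm \<phi> \<and> (\<forall>k. s k \<in> univ M) \<longrightarrow> (sat M \<phi> s \<longleftrightarrow> sat N \<phi> s))"

definition iso :: "('a \<Rightarrow> 'b) \<Rightarrow> ('a, 'r) rstr \<Rightarrow> ('b, 'r) rstr \<Rightarrow> bool" where
  "iso f M N \<longleftrightarrow> bij_betw f (univ M) (univ N) \<and>
     (\<forall>r xs. set xs \<subseteq> univ M \<longrightarrow> (rel M r xs \<longleftrightarrow> rel N r (map f xs)))"

text \<open>le_aleph k A  means  |A| <= aleph_k  (aleph_0 = natLeq, aleph_{k+1} = cardSuc aleph_k).\<close>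
fun le_aleph :: "nat \<Rightarrow> 'a set \<Rightarrow> bool" where
  "le_aleph 0 A = ((card_of A, natLeq) \<in> ordLeq)"
| "le_aleph (Suc k) A = (\<exists>B. le_aleph k B \<and> (card_of A, cardSuc (card_of B)) \<in> ordLeq)"

section \<open>The Hart--Shelah vocabulary (one-sorted, relational rendering)\<close>

datatype hs_sym =
    SI | SK | SH | SG | SGs | SHs   \<comment> \<open>sort predicates I, K, H, G, G*, H*\<close>
  | SMem      \<comment> \<open>i \<in> u  (i in I, u in K)\<close>
  | SHAdd     \<comment> \<open>graph of addition on H\<close>
  | SGAdd     \<comment> \<open>graph of addition on G\<close>
  | SEv       \<comment> \<open>graph of evaluation G x K -> H\<close>
  | SSupp     \<comment> \<open>u in support of gamma\<close>
  | SPG       \<comment> \<open>graph of projection G* -> K\<close>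
  | SActG     \<comment> \<open>graph of action G x G* -> G*\<close>
  | SPH       \<comment> \<open>graph of projection H* -> K\<close>
  | SActH     \<comment> \<open>graph of action H x H* -> H*\<close>
  | SQ        \<comment> \<open>Q subset (G* )^n x H*\<close>

fun hs_arity :: "nat \<Rightarrow> hs_sym \<Rightarrow> nat" where
  "hs_arity n SI = 1" | "hs_arity n SK = 1" | "hs_arity n SH = 1" | "hs_arity n SG = 1"
| "hs_arity n SGs = 1" | "hs_arity n SHs = 1" | "hs_arity n SMem = 2" | "hs_arity n SHAdd = 3"
| "hs_arity n SGAdd = 3" | "hs_arity n SEv = 3" | "hs_arity n SSupp = 2" | "hs_arity n SPG = 2"
| "hs_arity n SActG = 3" | "hs_arity n SPH = 2" | "hs_arity n SActH = 3" | "hs_arity n SQ = n + 1"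

definition sortset :: "('a, hs_sym) rstr \<Rightarrow> hs_sym \<Rightarrow> 'a set" where
  "sortset M S = {x. rel M S [x]}"

definition nsubsets :: "nat \<Rightarrow> 'i set \<Rightarrow> 'i set set" where
  "nsubsets n I = {w. w \<subseteq> I \<and> finite w \<and> card w = n}"

definition compat_idx :: "nat \<Rightarrow> 'i set \<Rightarrow> 'i set list \<Rightarrow> 'i set \<Rightarrow> bool" where
  "compat_idx n I us v \<longleftrightarrow> (\<exists>w. w \<subseteq> I \<and> finite w \<and> card w = n + 1 \<and>
      set us \<union> {v} = nsubsets n w)"

definition graph1 :: "('a, hs_sym) rstr \<Rightarrow> hs_sym \<Rightarrow> 'a set \<Rightarrow> 'a set \<Rightarrow> ('a \<Rightarrow> 'a) \<Rightarrow> bool" where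
  "graph1 M S A B f \<longleftrightarrow> (\<forall>a b. rel M S [a, b] \<longleftrightarrow> a \<in> A \<and> b = f a) \<and> (\<forall>a\<in>A. f a \<in> B)"

definition graph2 :: "('a, hs_sym) rstr \<Rightarrow> hs_sym \<Rightarrow> 'a set \<Rightarrow> 'a set \<Rightarrow> 'a set
                       \<Rightarrow> ('a \<Rightarrow> 'a \<Rightarrow> 'a) \<Rightarrow> bool" where
  "graph2 M S A B C f \<longleftrightarrow> (\<forall>a b c. rel M S [a, b, c] \<longleftrightarrow> a \<in> A \<and> b \<in> B \<and> c = f a b)
      \<and> (\<forall>a\<in>A. \<forall>b\<in>B. f a b \<in> C)"

definition in_Kn :: "nat \<Rightarrow> ('a, hs_sym) rstr \<Rightarrow> bool" where
  "in_Kn n M \<longleftrightarrow>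
   (let I = sortset M SI; K = sortset M SK; H = sortset M SH; G = sortset M SG;
        Gs = sortset M SGs; Hs = sortset M SHs;
        sorts = {SI, SK, SH, SG, SGs, SHs};
        \<kappa> = (\<lambda>u. {i\<in>I. rel M SMem [i, u]}) in
   \<comment> \<open>arities; relations live on the universe\<close>
   (\<forall>S xs. rel M S xs \<longrightarrow> length xs = hs_arity n S \<and> set xs \<subseteq> univ M) \<and>
   \<comment> \<open>the universe is the disjoint union of the sorts\<close>
   (\<forall>x\<in>univ M. \<exists>S\<in>sorts. rel M S [x]) \<and>
   (\<forall>x\<in>univ M. \<forall>S\<in>sorts. \<forall>T\<in>sorts. rel M S [x] \<and> rel M T [x] \<longrightarrow> S = T) \<and>
   \<comment> \<open>K = [I]^n with membership\<close>
   (\<forall>i u. rel M SMem [i, u] \<longrightarrow> i \<in> I \<and> u \<in> K) \<and>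
   bij_betw \<kappa> K (nsubsets n I) \<and>
   (\<exists>z e hadd gadd ev pg actg ph acth.
      \<comment> \<open>H is Z_2 (z = 0, e = 1)\<close>
      H = {z, e} \<and> z \<noteq> e \<and> graph2 M SHAdd H H H hadd \<and>
      (\<forall>a\<in>H. \<forall>b\<in>H. hadd a b = (if a = b then z else e)) \<and>
      \<comment> \<open>G is the direct sum of copies of Z_2 indexed by K, via evaluation\<close>
      graph2 M SGAdd G G G gadd \<and> graph2 M SEv G K H ev \<and>
      (\<forall>\<gamma>\<in>G. \<forall>\<delta>\<in>G. \<forall>u\<in>K. ev (gadd \<gamma> \<delta>) u = hadd (ev \<gamma> u) (ev \<delta> u)) \<and>
      bij_betw (\<lambda>\<gamma>. restrict (ev \<gamma>) K) G {\<phi>\<in>K \<rightarrow>\<^sub>E H. finite {u\<in>K. \<phi> u \<noteq> z}} \<and>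
      (\<forall>\<gamma> u. rel M SSupp [\<gamma>, u] \<longleftrightarrow> \<gamma> \<in> G \<and> u \<in> K \<and> ev \<gamma> u = e) \<and>
      \<comment> \<open>G*: projection onto K, regular G-action on each stalk\<close>
      graph1 M SPG Gs K pg \<and> graph2 M SActG G Gs Gs actg \<and>
      (\<forall>\<gamma>\<in>G. \<forall>x\<in>Gs. pg (actg \<gamma> x) = pg x) \<and>
      (\<forall>\<gamma>\<in>G. \<forall>\<delta>\<in>G. \<forall>x\<in>Gs. actg (gadd \<gamma> \<delta>) x = actg \<gamma> (actg \<delta> x)) \<and>
      (\<forall>u\<in>K. \<exists>x\<in>Gs. pg x = u) \<and>
      (\<forall>x\<in>Gs. \<forall>y\<in>Gs. pg x = pg y \<longrightarrow> (\<exists>!\<gamma>. \<gamma> \<in> G \<and> actg \<gamma> x = y)) \<and>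
      \<comment> \<open>H*: projection onto K, regular Z_2-action on each stalk\<close>
      graph1 M SPH Hs K ph \<and> graph2 M SActH H Hs Hs acth \<and>
      (\<forall>m\<in>H. \<forall>y\<in>Hs. ph (acth m y) = ph y) \<and>
      (\<forall>m\<in>H. \<forall>m'\<in>H. \<forall>y\<in>Hs. acth (hadd m m') y = acth m (acth m' y)) \<and>
      (\<forall>u\<in>K. \<exists>y\<in>Hs. ph y = u) \<and>
      (\<forall>x\<in>Hs. \<forall>y\<in>Hs. ph x = ph y \<longrightarrow> (\<exists>!m. m \<in> H \<and> acth m x = y)) \<and>
      \<comment> \<open>Q holds only on compatible stalk indices\<close>
      (\<forall>zs. rel M SQ zs \<longrightarrow> (\<exists>xs y. zs = xs @ [y] \<and> length xs = n \<and> set xs \<subseteq> Gs \<and> y \<in> Hs \<and>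
                compat_idx n I (map (\<kappa> \<circ> pg) xs) (\<kappa> (ph y)))) \<and>
      \<comment> \<open>Q is symmetric in the first n arguments\<close>
      (\<forall>xs xs' y. length xs = n \<and> mset xs' = mset xs \<longrightarrow>
                 (rel M SQ (xs' @ [y]) \<longleftrightarrow> rel M SQ (xs @ [y]))) \<and>
      \<comment> \<open>the equivariance condition\<close>
      (\<forall>xs y \<gamma>s m. length xs = n \<and> length \<gamma>s = n \<and> set xs \<subseteq> Gs \<and> y \<in> Hs \<and>
                   set \<gamma>s \<subseteq> G \<and> m \<in> H \<and>
                   compat_idx n I (map (\<kappa> \<circ> pg) xs) (\<kappa> (ph y)) \<longrightarrow>
         ((rel M SQ (map2 actg \<gamma>s xs @ [acth m y]) \<longleftrightarrow> rel M SQ (xs @ [y]))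
          \<longleftrightarrow> foldr hadd (map (\<lambda>\<gamma>. ev \<gamma> (ph y)) \<gamma>s @ [m]) z = z))))"

text \<open>K = [I]^n is represented
  by the n-subsets themselves, Z_2 by bool (True = 1), G = (+)_{u in K} Z_2 by finite subsets
  of K (supports), G* = K x G, H* = K x Z_2.\<close>
datatype 'i hs_elt =
    EI 'i
  | EK "'i set"
  | EH bool
  | EG "'i set set"
  | EGs "'i set" "'i set set"
  | EHs "'i set" bool

definition std_G :: "nat \<Rightarrow> 'i set \<Rightarrow> 'i set set set" where
  "std_G n I = {\<gamma>. \<gamma> \<subseteq> nsubsets n I \<and> finite \<gamma>}"

definition symdiff :: "'x set \<Rightarrow> 'x set \<Rightarrow> 'x set" where
  "symdiff a b = (a - b) \<union> (b - a)"

fun std_rel :: "nat \<Rightarrow> 'i set \<Rightarrow> hs_sym \<Rightarrow> 'i hs_elt list \<Rightarrow> bool" where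
  "std_rel n I SI xs = (\<exists>i\<in>I. xs = [EI i])"
| "std_rel n I SK xs = (\<exists>u\<in>nsubsets n I. xs = [EK u])"
| "std_rel n I SH xs = (\<exists>b. xs = [EH b])"
| "std_rel n I SG xs = (\<exists>\<gamma>\<in>std_G n I. xs = [EG \<gamma>])"
| "std_rel n I SGs xs = (\<exists>u\<in>nsubsets n I. \<exists>\<gamma>\<in>std_G n I. xs = [EGs u \<gamma>])"
| "std_rel n I SHs xs = (\<exists>u\<in>nsubsets n I. \<exists>b. xs = [EHs u b])"
| "std_rel n I SMem xs = (\<exists>i\<in>I. \<exists>u\<in>nsubsets n I. i \<in> u \<and> xs = [EI i, EK u])"
| "std_rel n I SHAdd xs = (\<exists>a b. xs = [EH a, EH b, EH (a \<noteq> b)])"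
| "std_rel n I SGAdd xs = (\<exists>\<gamma>\<in>std_G n I. \<exists>\<delta>\<in>std_G n I. xs = [EG \<gamma>, EG \<delta>, EG (symdiff \<gamma> \<delta>)])"
| "std_rel n I SEv xs = (\<exists>\<gamma>\<in>std_G n I. \<exists>u\<in>nsubsets n I. xs = [EG \<gamma>, EK u, EH (u \<in> \<gamma>)])"
| "std_rel n I SSupp xs = (\<exists>\<gamma>\<in>std_G n I. \<exists>u\<in>nsubsets n I. u \<in> \<gamma> \<and> xs = [EG \<gamma>, EK u])"
| "std_rel n I SPG xs = (\<exists>u\<in>nsubsets n I. \<exists>\<gamma>\<in>std_G n I. xs = [EGs u \<gamma>, EK u])"
| "std_rel n I SActG xs = (\<exists>\<delta>\<in>std_G n I. \<exists>u\<in>nsubsets n I. \<exists>\<gamma>\<in>std_G n I.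
        xs = [EG \<delta>, EGs u \<gamma>, EGs u (symdiff \<delta> \<gamma>)])"
| "std_rel n I SPH xs = (\<exists>u\<in>nsubsets n I. \<exists>b. xs = [EHs u b, EK u])"
| "std_rel n I SActH xs = (\<exists>a. \<exists>u\<in>nsubsets n I. \<exists>b. xs = [EH a, EHs u b, EHs u (a \<noteq> b)])"
| "std_rel n I SQ xs = (\<exists>us \<gamma>s v m. length us = n \<and> length \<gamma>s = n \<and>
        set us \<subseteq> nsubsets n I \<and> set \<gamma>s \<subseteq> std_G n I \<and> v \<in> nsubsets n I \<and>
        compat_idx n I us v \<and>
        m = odd (length (filter (\<lambda>\<gamma>. v \<in> \<gamma>) \<gamma>s)) \<and>
        xs = map2 EGs us \<gamma>s @ [EHs v m])"

definition std_univ :: "nat \<Rightarrow> 'i set \<Rightarrow> 'i hs_elt set" where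
  "std_univ n I = EI ` I \<union> EK ` nsubsets n I \<union> range EH \<union> EG ` std_G n I
     \<union> (\<lambda>(u, \<gamma>). EGs u \<gamma>) ` (nsubsets n I \<times> std_G n I)
     \<union> (\<lambda>(u, b). EHs u b) ` (nsubsets n I \<times> UNIV)"

definition std :: "nat \<Rightarrow> 'i set \<Rightarrow> ('i hs_elt, hs_sym) rstr" where
  "std n I = \<lparr>univ = std_univ n I, rel = std_rel n I\<rparr>"

end

theory Submission
  imports Defs
begin

context includes cardinal_syntax
begin

lemma le_aleph_mono: fixes B S :: "'a set" shows "le_aleph k B \<Longrightarrow> |S| \<le>o |B| \<Longrightarrow> le_aleph k S"
  by (cases k) (auto intro: ordLeq_transitive)

lemma linord_max_ex:
  assumes "finite s" "s \<noteq> {}" "s \<subseteq> Field r" "Linear_order r"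
  shows "\<exists>a\<in>s. \<forall>b\<in>s. (b, a) \<in> r"
  using assms
proof (induction s rule: finite_ne_induct)
  case (singleton x)
  then show ?case using assms(4) unfolding linear_order_on_def partial_order_on_def preorder_on_def refl_on_def
    by auto
next
  case (insert x F)
  then obtain a where a: "a \<in> F" "\<forall>b\<in>F. (b, a) \<in> r" by auto
  have tot: "(x, a) \<in> r \<or> (a, x) \<in> r \<or> x = a" using assms(4) insert a
    unfolding linear_order_on_def total_on_def by auto
  have refl: "(x,x) \<in> r" using assms(4) insert unfolding linear_order_on_def partial_order_on_def preorder_on_def refl_on_def
    by auto
  have tr: "trans r" using assms(4) unfolding linear_order_on_def partial_order_on_def preorder_on_def by auto
  show ?case
  proof (cases "(x, a) \<in> r")
    case True then show ?thesis using a by auto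
  next
    case False
    then have "(a, x) \<in> r" using tot refl by auto
    then show ?thesis using a refl tr by (auto dest: transD)
  qed
qed

lemma kur_base:
  assumes "|A| \<le>o natLeq"
  shows "\<exists>F::'a set \<Rightarrow> 'a set. (\<forall>s. finite (F s)) \<and>
     (\<forall>w. w \<subseteq> A \<longrightarrow> finite w \<longrightarrow> card w = Suc (Suc 0) \<longrightarrow> (\<exists>x\<in>w. x \<in> F (w - {x})))"
proof -
  have "|A| \<le>o |UNIV::nat set|" using ordLeq_ordIso_trans[OF assms ordIso_symmetric[OF card_of_nat]] .
  then obtain g :: "'a \<Rightarrow> nat" where g: "inj_on g A" using card_of_ordLeq[of A "UNIV::nat set"] by auto
  define F where "F s = (if finite s then {b\<in>A. \<exists>a\<in>s. g b < g a} else {})" for s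
  have fin1: "finite {b\<in>A. g b < g a}" for a
  proof -
    have "{b\<in>A. g b < g a} \<subseteq> inv_into A g ` {..<g a}"
    proof (rule subsetI)
      fix b assume "b \<in> {b\<in>A. g b < g a}"
      then have "b = inv_into A g (g b)" "g b \<in> {..<g a}" using inv_into_f_f[OF g] by auto
      then show "b \<in> inv_into A g ` {..<g a}" by (rule image_eqI)
    qed
    then show ?thesis by (rule finite_subset) simp
  qed
  have "finite (F s)" for s
  proof (cases "finite s")
    case True
    have "F s = (\<Union>a\<in>s. {b\<in>A. g b < g a})" using True unfolding F_def by auto
    then show ?thesis using True fin1 by simp
  qed (simp add: F_def)
  moreover have "\<exists>x\<in>w. x \<in> F (w - {x})" if hw: "w \<subseteq> A" "finite w" "card w = Suc (Suc 0)" for w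
  proof -
    obtain a b where ab: "w = {a, b}" "a \<noteq> b" using hw(3) card_2_iff[of w] numeral_2_eq_2 by metis
    have "a \<in> A" "b \<in> A" using ab hw(1) by auto
    then have "g a \<noteq> g b" using g ab(2) inj_onD by metis
    show ?thesis
    proof (cases "g a < g b")
      case True
      have "w - {a} = {b}" using ab by auto
      then have "a \<in> F (w - {a})" unfolding F_def using True ab hw(1) by auto
      then show ?thesis using ab by auto
    next
      case False
      then have lt: "g b < g a" using \<open>g a \<noteq> g b\<close> by auto
      have "w - {b} = {a}" using ab by auto
      then have "b \<in> F (w - {b})" unfolding F_def using lt ab hw(1) by auto
      then show ?thesis using ab by auto
    qed
  qed
  ultimately show ?thesis by blast
qed

lemma kur:
  "le_aleph k A \<Longrightarrow> \<exists>F::'a set \<Rightarrow> 'a set. (\<forall>s. finite (F s)) \<and>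
     (\<forall>w. w \<subseteq> A \<longrightarrow> finite w \<longrightarrow> card w = Suc (Suc k) \<longrightarrow> (\<exists>x\<in>w. x \<in> F (w - {x})))"
proof (induction k arbitrary: A)
  case 0
  then show ?case using kur_base by simp
next
  case (Suc k)
  then obtain B :: "'a set" where B: "le_aleph k B" "|A| \<le>o cardSuc |B|" by auto
  define r where "r = |A|"
  have wo: "Well_order r" unfolding r_def by (rule card_of_Well_order)
  have fr: "Field r = A" unfolding r_def by (rule Field_card_of)
  have co: "Card_order r" unfolding r_def by (rule card_of_Card_order)
  have lo: "Linear_order r" using wo unfolding well_order_on_def by auto
  have seg: "le_aleph k (underS r a)" if "a \<in> A" for a
  proof -
    have "|underS r a| <o r" using card_of_underS co fr that by auto
    then have "|underS r a| <o cardSuc |B|" using B(2) r_def ordLess_ordLeq_trans by blast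
    then have "|underS r a| \<le>o |B|" using cardSuc_ordLeq_ordLess card_of_Card_order by blast
    then show ?thesis using B(1) le_aleph_mono by blast
  qed
  define Fam where "Fam a = (SOME F::'a set \<Rightarrow> 'a set. (\<forall>s. finite (F s)) \<and>
     (\<forall>w. w \<subseteq> underS r a \<longrightarrow> finite w \<longrightarrow> card w = Suc (Suc k) \<longrightarrow> (\<exists>x\<in>w. x \<in> F (w - {x}))))" for a
  have Fam: "(\<forall>s. finite (Fam a s)) \<and>
     (\<forall>w. w \<subseteq> underS r a \<longrightarrow> finite w \<longrightarrow> card w = Suc (Suc k) \<longrightarrow> (\<exists>x\<in>w. x \<in> Fam a (w - {x})))"
    if "a \<in> A" for a
    unfolding Fam_def by (rule someI_ex[OF Suc.IH[OF seg[OF that]]])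
  define mx where "mx s = (THE a. a \<in> s \<and> (\<forall>b\<in>s. (b, a) \<in> r))" for s
  have antis: "antisym r" using lo unfolding linear_order_on_def partial_order_on_def by auto
  have mx: "mx s \<in> s \<and> (\<forall>b\<in>s. (b, mx s) \<in> r)" if hs: "finite s" "s \<noteq> {}" "s \<subseteq> A" for s
  proof -
    obtain a where a: "a\<in>s" "\<forall>b\<in>s. (b, a) \<in> r" using linord_max_ex[OF hs(1,2) _ lo] hs(3) fr by auto
    have "mx s = a" unfolding mx_def
      by (rule the_equality) (use a antis in \<open>auto dest: antisymD\<close>)
    then show ?thesis using a by auto
  qed
  have mx_eq: "mx s = a" if "a \<in> s" "\<forall>b\<in>s. (b, a) \<in> r" for s a
    unfolding mx_def by (rule the_equality) (use that antis in \<open>auto dest: antisymD\<close>)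
  define F where "F s = (if finite s \<and> s \<noteq> {} \<and> s \<subseteq> A then Fam (mx s) (s - {mx s}) else {})" for s
  have "finite (F s)" for s
    unfolding F_def using Fam mx by auto
  moreover have "\<exists>x\<in>w. x \<in> F (w - {x})" if w: "w \<subseteq> A" "finite w" "card w = Suc (Suc (Suc k))" for w
  proof -
    have "w \<noteq> {}" using w by auto
    then have a: "mx w \<in> w" "\<forall>b\<in>w. (b, mx w) \<in> r" using mx w by auto
    define a where "a = mx w"
    have sub: "w - {a} \<subseteq> underS r a" using a unfolding a_def underS_def by auto
    have cw: "card (w - {a}) = Suc (Suc k)" using w a a_def by auto
    obtain x where x: "x \<in> w - {a}" "x \<in> Fam a (w - {a} - {x})"
    proof -
      have aA: "a \<in> A" using a a_def w by auto
      have "\<forall>w. w \<subseteq> underS r a \<longrightarrow> finite w \<longrightarrow> card w = Suc (Suc k) \<longrightarrow> (\<exists>x\<in>w. x \<in> Fam a (w - {x}))"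
        using Fam[OF aA] by simp
      then have "\<exists>x\<in>w - {a}. x \<in> Fam a (w - {a} - {x})" using sub cw w(2) by simp
      then show ?thesis using that by blast
    qed
    have m2: "mx (w - {x}) = a" using a a_def x by (intro mx_eq) auto
    have "F (w - {x}) = Fam a (w - {x} - {a})"
      unfolding F_def using m2 w x a a_def by auto
    also have "w - {x} - {a} = w - {a} - {x}" by auto
    finally show ?thesis using x by auto
  qed
  ultimately show ?case by blast
qed


end

locale hsK =
  fixes n :: nat and M :: "('a, hs_sym) rstr"
    and I K H G Gs Hs :: "'a set" and \<kappa> :: "'a \<Rightarrow> 'a set"
    and z e :: 'a and hadd gadd ev actg acth :: "'a \<Rightarrow> 'a \<Rightarrow> 'a" and pg ph :: "'a \<Rightarrow> 'a"
  assumes I_def: "I = sortset M SI" and K_def: "K = sortset M SK" and H_def: "H = sortset M SH"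
    and G_def: "G = sortset M SG" and Gs_def: "Gs = sortset M SGs" and Hs_def: "Hs = sortset M SHs"
    and \<kappa>_def: "\<kappa> = (\<lambda>u. {i\<in>I. rel M SMem [i, u]})"
    and arity: "\<forall>S xs. rel M S xs \<longrightarrow> length xs = hs_arity n S \<and> set xs \<subseteq> univ M"
    and cover: "\<forall>x\<in>univ M. \<exists>S\<in>{SI, SK, SH, SG, SGs, SHs}. rel M S [x]"
    and disj: "\<forall>x\<in>univ M. \<forall>S\<in>{SI, SK, SH, SG, SGs, SHs}. \<forall>T\<in>{SI, SK, SH, SG, SGs, SHs}. rel M S [x] \<and> rel M T [x] \<longrightarrow> S = T"
    and memrel: "\<forall>i u. rel M SMem [i, u] \<longrightarrow> i \<in> I \<and> u \<in> K"
    and kbij: "bij_betw \<kappa> K (nsubsets n I)"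
    and Hze: "H = {z, e}" and zne: "z \<noteq> e" and haddg: "graph2 M SHAdd H H H hadd"
    and hadd_eq: "\<forall>a\<in>H. \<forall>b\<in>H. hadd a b = (if a = b then z else e)"
    and gaddg: "graph2 M SGAdd G G G gadd" and evg: "graph2 M SEv G K H ev"
    and ev_add: "\<forall>\<gamma>\<in>G. \<forall>\<delta>\<in>G. \<forall>u\<in>K. ev (gadd \<gamma> \<delta>) u = hadd (ev \<gamma> u) (ev \<delta> u)"
    and gbij: "bij_betw (\<lambda>\<gamma>. restrict (ev \<gamma>) K) G {\<phi>\<in>K \<rightarrow>\<^sub>E H. finite {u\<in>K. \<phi> u \<noteq> z}}"
    and supp: "\<forall>\<gamma> u. rel M SSupp [\<gamma>, u] \<longleftrightarrow> \<gamma> \<in> G \<and> u \<in> K \<and> ev \<gamma> u = e"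
    and pgg: "graph1 M SPG Gs K pg" and actgg: "graph2 M SActG G Gs Gs actg"
    and pg_act: "\<forall>\<gamma>\<in>G. \<forall>x\<in>Gs. pg (actg \<gamma> x) = pg x"
    and act_add: "\<forall>\<gamma>\<in>G. \<forall>\<delta>\<in>G. \<forall>x\<in>Gs. actg (gadd \<gamma> \<delta>) x = actg \<gamma> (actg \<delta> x)"
    and stalkG: "\<forall>u\<in>K. \<exists>x\<in>Gs. pg x = u"
    and regG: "\<forall>x\<in>Gs. \<forall>y\<in>Gs. pg x = pg y \<longrightarrow> (\<exists>!\<gamma>. \<gamma> \<in> G \<and> actg \<gamma> x = y)"
    and phg: "graph1 M SPH Hs K ph" and acthg: "graph2 M SActH H Hs Hs acth"
    and ph_act: "\<forall>m\<in>H. \<forall>y\<in>Hs. ph (acth m y) = ph y"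
    and acth_add: "\<forall>m\<in>H. \<forall>m'\<in>H. \<forall>y\<in>Hs. acth (hadd m m') y = acth m (acth m' y)"
    and stalkH: "\<forall>u\<in>K. \<exists>y\<in>Hs. ph y = u"
    and regH: "\<forall>x\<in>Hs. \<forall>y\<in>Hs. ph x = ph y \<longrightarrow> (\<exists>!m. m \<in> H \<and> acth m x = y)"
    and Qcomp: "\<forall>zs. rel M SQ zs \<longrightarrow> (\<exists>xs y. zs = xs @ [y] \<and> length xs = n \<and> set xs \<subseteq> Gs \<and> y \<in> Hs \<and>
                compat_idx n I (map (\<kappa> \<circ> pg) xs) (\<kappa> (ph y)))"
    and Qsym: "\<forall>xs xs' y. length xs = n \<and> mset xs' = mset xs \<longrightarrow>
                 (rel M SQ (xs' @ [y]) \<longleftrightarrow> rel M SQ (xs @ [y]))"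
    and Qequi: "\<forall>xs y \<gamma>s m. length xs = n \<and> length \<gamma>s = n \<and> set xs \<subseteq> Gs \<and> y \<in> Hs \<and>
                   set \<gamma>s \<subseteq> G \<and> m \<in> H \<and>
                   compat_idx n I (map (\<kappa> \<circ> pg) xs) (\<kappa> (ph y)) \<longrightarrow>
         ((rel M SQ (map2 actg \<gamma>s xs @ [acth m y]) \<longleftrightarrow> rel M SQ (xs @ [y]))
          \<longleftrightarrow> foldr hadd (map (\<lambda>\<gamma>. ev \<gamma> (ph y)) \<gamma>s @ [m]) z = z)"

lemma in_Kn_hsK:
  assumes "in_Kn n M"
  shows "\<exists>z e hadd gadd ev actg acth pg ph. hsK n M (sortset M SI) (sortset M SK) (sortset M SH)
     (sortset M SG) (sortset M SGs) (sortset M SHs) (\<lambda>u. {i\<in>sortset M SI. rel M SMem [i, u]})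
     z e hadd gadd ev actg acth pg ph"
  using assms unfolding in_Kn_def Let_def hsK_def
  apply (elim conjE exE)
  apply (intro exI conjI refl)
  apply assumption+
  done

context hsK begin

lemma sort_iff: "x \<in> sortset M S \<longleftrightarrow> rel M S [x]" by (simp add: sortset_def)

lemma rel_univ: "rel M S xs \<Longrightarrow> set xs \<subseteq> univ M" using arity by blast
lemma rel_len: "rel M S xs \<Longrightarrow> length xs = hs_arity n S" using arity by blast

lemma I_univ: "x \<in> I \<Longrightarrow> x \<in> univ M" using rel_univ[of SI "[x]"] by (auto simp: I_def sort_iff)
lemma K_univ: "x \<in> K \<Longrightarrow> x \<in> univ M" using rel_univ[of SK "[x]"] by (auto simp: K_def sort_iff)
lemma H_univ: "x \<in> H \<Longrightarrow> x \<in> univ M" using rel_univ[of SH "[x]"] by (auto simp: H_def sort_iff)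
lemma G_univ: "x \<in> G \<Longrightarrow> x \<in> univ M" using rel_univ[of SG "[x]"] by (auto simp: G_def sort_iff)
lemma Gs_univ: "x \<in> Gs \<Longrightarrow> x \<in> univ M" using rel_univ[of SGs "[x]"] by (auto simp: Gs_def sort_iff)
lemma Hs_univ: "x \<in> Hs \<Longrightarrow> x \<in> univ M" using rel_univ[of SHs "[x]"] by (auto simp: Hs_def sort_iff)

lemma cover': "x \<in> univ M \<Longrightarrow> x \<in> I \<or> x \<in> K \<or> x \<in> H \<or> x \<in> G \<or> x \<in> Gs \<or> x \<in> Hs"
proof -
  assume "x \<in> univ M"
  then obtain S where S: "S \<in> {SI, SK, SH, SG, SGs, SHs}" "rel M S [x]" using cover by blast
  then show ?thesis unfolding I_def K_def H_def G_def Gs_def Hs_def sort_iff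
    by (cases S) auto
qed

lemma disj': "x \<in> sortset M S \<Longrightarrow> x \<in> sortset M T \<Longrightarrow> S \<in> {SI, SK, SH, SG, SGs, SHs} \<Longrightarrow>
   T \<in> {SI, SK, SH, SG, SGs, SHs} \<Longrightarrow> S = T"
proof -
  assume a: "x \<in> sortset M S" "x \<in> sortset M T" "S \<in> {SI, SK, SH, SG, SGs, SHs}" "T \<in> {SI, SK, SH, SG, SGs, SHs}"
  then have "x \<in> univ M" using rel_univ[of S "[x]"] by (auto simp: sort_iff)
  then have "\<forall>S\<in>{SI, SK, SH, SG, SGs, SHs}. \<forall>T\<in>{SI, SK, SH, SG, SGs, SHs}. rel M S [x] \<and> rel M T [x] \<longrightarrow> S = T"
    by (rule bspec[OF disj])
  then show "S = T" using a(3,4) a(1,2)[unfolded sort_iff] by (meson bspec)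
qed

lemma disj2: "rel M S [x] \<Longrightarrow> rel M T [x] \<Longrightarrow> S \<in> {SI, SK, SH, SG, SGs, SHs} \<Longrightarrow>
   T \<in> {SI, SK, SH, SG, SGs, SHs} \<Longrightarrow> S = T"
  using disj'[of x S T] by (simp add: sort_iff)

lemma disjI: "x \<in> I \<Longrightarrow> x \<notin> K \<and> x \<notin> H \<and> x \<notin> G \<and> x \<notin> Gs \<and> x \<notin> Hs"
proof -
  assume "x \<in> I"
  then have r: "rel M SI [x]" by (simp add: I_def sort_iff)
  have "x \<notin> K" unfolding K_def sort_iff using disj2[OF r, of SK] by auto
  have "x \<notin> H" unfolding H_def sort_iff using disj2[OF r, of SH] by auto
  have "x \<notin> G" unfolding G_def sort_iff using disj2[OF r, of SG] by auto
  have "x \<notin> Gs" unfolding Gs_def sort_iff using disj2[OF r, of SGs] by auto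
  have "x \<notin> Hs" unfolding Hs_def sort_iff using disj2[OF r, of SHs] by auto
  then show ?thesis using \<open>x \<notin> K\<close> \<open>x \<notin> H\<close> \<open>x \<notin> G\<close> \<open>x \<notin> Gs\<close> \<open>x \<notin> Hs\<close> by blast
qed
lemma disjK: "x \<in> K \<Longrightarrow> x \<notin> I \<and> x \<notin> H \<and> x \<notin> G \<and> x \<notin> Gs \<and> x \<notin> Hs"
proof -
  assume "x \<in> K"
  then have r: "rel M SK [x]" by (simp add: K_def sort_iff)
  have "x \<notin> I" unfolding I_def sort_iff using disj2[OF r, of SI] by auto
  have "x \<notin> H" unfolding H_def sort_iff using disj2[OF r, of SH] by auto
  have "x \<notin> G" unfolding G_def sort_iff using disj2[OF r, of SG] by auto
  have "x \<notin> Gs" unfolding Gs_def sort_iff using disj2[OF r, of SGs] by auto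
  have "x \<notin> Hs" unfolding Hs_def sort_iff using disj2[OF r, of SHs] by auto
  then show ?thesis using \<open>x \<notin> I\<close> \<open>x \<notin> H\<close> \<open>x \<notin> G\<close> \<open>x \<notin> Gs\<close> \<open>x \<notin> Hs\<close> by blast
qed
lemma disjH: "x \<in> H \<Longrightarrow> x \<notin> I \<and> x \<notin> K \<and> x \<notin> G \<and> x \<notin> Gs \<and> x \<notin> Hs"
proof -
  assume "x \<in> H"
  then have r: "rel M SH [x]" by (simp add: H_def sort_iff)
  have "x \<notin> I" unfolding I_def sort_iff using disj2[OF r, of SI] by auto
  have "x \<notin> K" unfolding K_def sort_iff using disj2[OF r, of SK] by auto
  have "x \<notin> G" unfolding G_def sort_iff using disj2[OF r, of SG] by auto
  have "x \<notin> Gs" unfolding Gs_def sort_iff using disj2[OF r, of SGs] by auto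
  have "x \<notin> Hs" unfolding Hs_def sort_iff using disj2[OF r, of SHs] by auto
  then show ?thesis using \<open>x \<notin> I\<close> \<open>x \<notin> K\<close> \<open>x \<notin> G\<close> \<open>x \<notin> Gs\<close> \<open>x \<notin> Hs\<close> by blast
qed
lemma disjG: "x \<in> G \<Longrightarrow> x \<notin> I \<and> x \<notin> K \<and> x \<notin> H \<and> x \<notin> Gs \<and> x \<notin> Hs"
proof -
  assume "x \<in> G"
  then have r: "rel M SG [x]" by (simp add: G_def sort_iff)
  have "x \<notin> I" unfolding I_def sort_iff using disj2[OF r, of SI] by auto
  have "x \<notin> K" unfolding K_def sort_iff using disj2[OF r, of SK] by auto
  have "x \<notin> H" unfolding H_def sort_iff using disj2[OF r, of SH] by auto
  have "x \<notin> Gs" unfolding Gs_def sort_iff using disj2[OF r, of SGs] by auto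
  have "x \<notin> Hs" unfolding Hs_def sort_iff using disj2[OF r, of SHs] by auto
  then show ?thesis using \<open>x \<notin> I\<close> \<open>x \<notin> K\<close> \<open>x \<notin> H\<close> \<open>x \<notin> Gs\<close> \<open>x \<notin> Hs\<close> by blast
qed
lemma disjGs: "x \<in> Gs \<Longrightarrow> x \<notin> I \<and> x \<notin> K \<and> x \<notin> H \<and> x \<notin> G \<and> x \<notin> Hs"
proof -
  assume "x \<in> Gs"
  then have r: "rel M SGs [x]" by (simp add: Gs_def sort_iff)
  have "x \<notin> I" unfolding I_def sort_iff using disj2[OF r, of SI] by auto
  have "x \<notin> K" unfolding K_def sort_iff using disj2[OF r, of SK] by auto
  have "x \<notin> H" unfolding H_def sort_iff using disj2[OF r, of SH] by auto
  have "x \<notin> G" unfolding G_def sort_iff using disj2[OF r, of SG] by auto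
  have "x \<notin> Hs" unfolding Hs_def sort_iff using disj2[OF r, of SHs] by auto
  then show ?thesis using \<open>x \<notin> I\<close> \<open>x \<notin> K\<close> \<open>x \<notin> H\<close> \<open>x \<notin> G\<close> \<open>x \<notin> Hs\<close> by blast
qed
lemma disjHs: "x \<in> Hs \<Longrightarrow> x \<notin> I \<and> x \<notin> K \<and> x \<notin> H \<and> x \<notin> G \<and> x \<notin> Gs"
proof -
  assume "x \<in> Hs"
  then have r: "rel M SHs [x]" by (simp add: Hs_def sort_iff)
  have "x \<notin> I" unfolding I_def sort_iff using disj2[OF r, of SI] by auto
  have "x \<notin> K" unfolding K_def sort_iff using disj2[OF r, of SK] by auto
  have "x \<notin> H" unfolding H_def sort_iff using disj2[OF r, of SH] by auto
  have "x \<notin> G" unfolding G_def sort_iff using disj2[OF r, of SG] by auto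
  have "x \<notin> Gs" unfolding Gs_def sort_iff using disj2[OF r, of SGs] by auto
  then show ?thesis using \<open>x \<notin> I\<close> \<open>x \<notin> K\<close> \<open>x \<notin> H\<close> \<open>x \<notin> G\<close> \<open>x \<notin> Gs\<close> by blast
qed

lemma g2: "graph2 M S A B C f \<Longrightarrow> rel M S [a, b, c] \<longleftrightarrow> a \<in> A \<and> b \<in> B \<and> c = f a b"
  unfolding graph2_def by blast
lemma g2in: "graph2 M S A B C f \<Longrightarrow> a \<in> A \<Longrightarrow> b \<in> B \<Longrightarrow> f a b \<in> C"
  unfolding graph2_def by blast
lemma g1: "graph1 M S A B f \<Longrightarrow> rel M S [a, b] \<longleftrightarrow> a \<in> A \<and> b = f a"
  unfolding graph1_def by blast
lemma g1in: "graph1 M S A B f \<Longrightarrow> a \<in> A \<Longrightarrow> f a \<in> B"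
  unfolding graph1_def by blast

lemma ev_H: "\<gamma> \<in> G \<Longrightarrow> u \<in> K \<Longrightarrow> ev \<gamma> u \<in> H" using g2in[OF evg] .
lemma ev_ze: "\<gamma> \<in> G \<Longrightarrow> u \<in> K \<Longrightarrow> ev \<gamma> u = z \<or> ev \<gamma> u = e" using ev_H Hze by auto
lemma gadd_G: "\<gamma> \<in> G \<Longrightarrow> \<delta> \<in> G \<Longrightarrow> gadd \<gamma> \<delta> \<in> G" using g2in[OF gaddg] .
lemma hadd_H: "a \<in> H \<Longrightarrow> b \<in> H \<Longrightarrow> hadd a b \<in> H" using g2in[OF haddg] .
lemma actg_Gs: "\<gamma> \<in> G \<Longrightarrow> x \<in> Gs \<Longrightarrow> actg \<gamma> x \<in> Gs" using g2in[OF actgg] .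
lemma acth_Hs: "m \<in> H \<Longrightarrow> y \<in> Hs \<Longrightarrow> acth m y \<in> Hs" using g2in[OF acthg] .
lemma pg_K: "x \<in> Gs \<Longrightarrow> pg x \<in> K" using g1in[OF pgg] .
lemma ph_K: "x \<in> Hs \<Longrightarrow> ph x \<in> K" using g1in[OF phg] .
lemma z_H: "z \<in> H" and e_H: "e \<in> H" using Hze by auto

lemma kinj: "u \<in> K \<Longrightarrow> v \<in> K \<Longrightarrow> \<kappa> u = \<kappa> v \<Longrightarrow> u = v"
  using kbij unfolding bij_betw_def by (auto dest: inj_onD)
lemma k_nsub: "u \<in> K \<Longrightarrow> \<kappa> u \<in> nsubsets n I"
  using kbij unfolding bij_betw_def by auto
lemma k_surj: "s \<in> nsubsets n I \<Longrightarrow> \<exists>u\<in>K. \<kappa> u = s"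
  using kbij unfolding bij_betw_def by (metis imageE)
lemma k_mem: "i \<in> \<kappa> u \<longleftrightarrow> i \<in> I \<and> rel M SMem [i, u]"
  by (simp add: \<kappa>_def)

lemma G_inj: "\<gamma> \<in> G \<Longrightarrow> \<delta> \<in> G \<Longrightarrow> (\<forall>u\<in>K. ev \<gamma> u = ev \<delta> u) \<Longrightarrow> \<gamma> = \<delta>"
proof -
  assume a: "\<gamma> \<in> G" "\<delta> \<in> G" "\<forall>u\<in>K. ev \<gamma> u = ev \<delta> u"
  have "restrict (ev \<gamma>) K = restrict (ev \<delta>) K" using a(3) by (auto simp: restrict_def)
  then show "\<gamma> = \<delta>" using gbij a(1,2) unfolding bij_betw_def inj_on_def by blast
qed

lemma G_fin: "\<gamma> \<in> G \<Longrightarrow> finite {u\<in>K. ev \<gamma> u = e}"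
proof -
  assume a: "\<gamma> \<in> G"
  then have "restrict (ev \<gamma>) K \<in> {\<phi>\<in>K \<rightarrow>\<^sub>E H. finite {u\<in>K. \<phi> u \<noteq> z}}"
    using gbij unfolding bij_betw_def by blast
  then have "finite {u\<in>K. restrict (ev \<gamma>) K u \<noteq> z}" by simp
  moreover have "{u\<in>K. restrict (ev \<gamma>) K u \<noteq> z} = {u\<in>K. ev \<gamma> u \<noteq> z}" by auto
  ultimately have "finite {u\<in>K. ev \<gamma> u \<noteq> z}" by simp
  moreover have "{u\<in>K. ev \<gamma> u = e} \<subseteq> {u\<in>K. ev \<gamma> u \<noteq> z}" using zne by auto
  ultimately show ?thesis using finite_subset by blast
qed

lemma G_ex: "finite T \<Longrightarrow> T \<subseteq> K \<Longrightarrow> \<exists>\<gamma>\<in>G. \<forall>u\<in>K. ev \<gamma> u = (if u \<in> T then e else z)"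
proof -
  assume a: "finite T" "T \<subseteq> K"
  define \<phi> where "\<phi> = restrict (\<lambda>u. if u \<in> T then e else z) K"
  have "{u\<in>K. \<phi> u \<noteq> z} \<subseteq> T" using zne by (auto simp: \<phi>_def)
  then have "finite {u\<in>K. \<phi> u \<noteq> z}" using a(1) finite_subset by blast
  moreover have "\<phi> \<in> K \<rightarrow>\<^sub>E H" using Hze by (auto simp: \<phi>_def)
  ultimately have "\<phi> \<in> (\<lambda>\<gamma>. restrict (ev \<gamma>) K) ` G" using gbij unfolding bij_betw_def by auto
  then obtain \<gamma> where "\<gamma> \<in> G" "restrict (ev \<gamma>) K = \<phi>" by auto
  then have eq: "restrict (ev \<gamma>) K = \<phi>" and gG: "\<gamma> \<in> G" by auto
  have "ev \<gamma> u = (if u \<in> T then e else z)" if "u \<in> K" for u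
  proof -
    have "ev \<gamma> u = restrict (ev \<gamma>) K u" using that by simp
    also have "\<dots> = \<phi> u" using eq by simp
    also have "\<dots> = (if u \<in> T then e else z)" using that by (simp add: \<phi>_def)
    finally show ?thesis .
  qed
  then show ?thesis using gG by blast
qed

lemma regG': "x \<in> Gs \<Longrightarrow> y \<in> Gs \<Longrightarrow> pg x = pg y \<Longrightarrow> \<exists>!\<gamma>. \<gamma> \<in> G \<and> actg \<gamma> x = y"
  using regG by blast
lemma regH': "x \<in> Hs \<Longrightarrow> y \<in> Hs \<Longrightarrow> ph x = ph y \<Longrightarrow> \<exists>!m. m \<in> H \<and> acth m x = y"
  using regH by blast

lemma hadd_z: "a \<in> H \<Longrightarrow> hadd z a = a" using hadd_eq Hze zne by auto
lemma hadd_self: "a \<in> H \<Longrightarrow> hadd a a = z" using hadd_eq by auto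

lemma parity: "set L \<subseteq> H \<Longrightarrow> (foldr hadd L z = z) \<longleftrightarrow> even (length (filter (\<lambda>a. a = e) L))"
proof (induction L)
  case Nil then show ?case by simp
next
  case (Cons a L)
  have r: "foldr hadd L z \<in> H"
    using Cons.prems by (induction L) (auto simp: z_H hadd_H)
  have aH: "a \<in> H" using Cons.prems by auto
  have eq: "foldr hadd (a # L) z = hadd a (foldr hadd L z)" by simp
  have IH: "(foldr hadd L z = z) \<longleftrightarrow> even (length (filter (\<lambda>a. a = e) L))" using Cons by auto
  show ?case
  proof (cases "a = e")
    case True
    have "hadd a (foldr hadd L z) = (if e = foldr hadd L z then z else e)" using hadd_eq aH r True by auto
    moreover have "foldr hadd L z = e \<longleftrightarrow> foldr hadd L z \<noteq> z" using r Hze zne by auto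
    ultimately show ?thesis using eq IH True zne by auto
  next
    case False
    then have "a = z" using aH Hze by auto
    then show ?thesis using eq IH hadd_z[OF r] zne by auto
  qed
qed

end


locale hsB = hsK +
  fixes bG bH :: "'a \<Rightarrow> 'a"
  assumes bG: "\<And>u. u \<in> K \<Longrightarrow> bG u \<in> Gs \<and> pg (bG u) = u"
    and bH: "\<And>u. u \<in> K \<Longrightarrow> bH u \<in> Hs \<and> ph (bH u) = u"
    and Qbase: "\<And>us v. length us = n \<Longrightarrow> set us \<subseteq> K \<Longrightarrow> v \<in> K \<Longrightarrow>
        compat_idx n I (map \<kappa> us) (\<kappa> v) \<Longrightarrow> rel M SQ (map bG us @ [bH v])"
begin

definition dG where "dG x = (THE \<delta>. \<delta> \<in> G \<and> actg \<delta> (bG (pg x)) = x)"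
definition dH where "dH y = (THE m. m \<in> H \<and> acth m (bH (ph y)) = y)"
definition spt where "spt \<gamma> = \<kappa> ` {u\<in>K. ev \<gamma> u = e}"
definition fmap where "fmap x = (if x \<in> I then EI x else if x \<in> K then EK (\<kappa> x) else if x \<in> H then EH (x = e)
   else if x \<in> G then EG (spt x) else if x \<in> Gs then EGs (\<kappa> (pg x)) (spt (dG x))
   else EHs (\<kappa> (ph x)) (dH x = e))"

lemma dG_ex: "x \<in> Gs \<Longrightarrow> \<exists>!\<delta>. \<delta> \<in> G \<and> actg \<delta> (bG (pg x)) = x"
  using regG'[of "bG (pg x)" x] bG[of "pg x"] pg_K by auto
lemma dG_spec: "x \<in> Gs \<Longrightarrow> dG x \<in> G \<and> actg (dG x) (bG (pg x)) = x"
  unfolding dG_def by (rule theI'[OF dG_ex])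
lemma dG_unique: "x \<in> Gs \<Longrightarrow> \<delta> \<in> G \<Longrightarrow> actg \<delta> (bG (pg x)) = x \<Longrightarrow> dG x = \<delta>"
  using dG_ex dG_spec by blast
lemma dG_act: "d \<in> G \<Longrightarrow> x \<in> Gs \<Longrightarrow> dG (actg d x) = gadd d (dG x)"
proof -
  assume a: "d \<in> G" "x \<in> Gs"
  have p: "pg (actg d x) = pg x" using pg_act a by blast
  have "actg (gadd d (dG x)) (bG (pg x)) = actg d (actg (dG x) (bG (pg x)))"
    using act_add a dG_spec bG pg_K by blast
  also have "\<dots> = actg d x" using dG_spec a by simp
  finally show ?thesis using dG_unique[of "actg d x"] p a actg_Gs gadd_G dG_spec by simp
qed
lemma base_act: "u \<in> K \<Longrightarrow> \<delta> \<in> G \<Longrightarrow> actg \<delta> (bG u) \<in> Gs \<and> pg (actg \<delta> (bG u)) = u \<and> dG (actg \<delta> (bG u)) = \<delta>"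
proof -
  assume a: "u \<in> K" "\<delta> \<in> G"
  have 1: "actg \<delta> (bG u) \<in> Gs" using actg_Gs a bG by blast
  have 2: "pg (actg \<delta> (bG u)) = u" using pg_act a bG by auto
  show ?thesis using 1 2 dG_unique[OF 1 a(2)] by simp
qed

lemma dH_ex: "x \<in> Hs \<Longrightarrow> \<exists>!m. m \<in> H \<and> acth m (bH (ph x)) = x"
  using regH'[of "bH (ph x)" x] bH[of "ph x"] ph_K by auto
lemma dH_spec: "x \<in> Hs \<Longrightarrow> dH x \<in> H \<and> acth (dH x) (bH (ph x)) = x"
  unfolding dH_def by (rule theI'[OF dH_ex])
lemma dH_unique: "x \<in> Hs \<Longrightarrow> m \<in> H \<Longrightarrow> acth m (bH (ph x)) = x \<Longrightarrow> dH x = m"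
  using dH_ex dH_spec by blast
lemma dH_act: "d \<in> H \<Longrightarrow> x \<in> Hs \<Longrightarrow> dH (acth d x) = hadd d (dH x)"
proof -
  assume a: "d \<in> H" "x \<in> Hs"
  have p: "ph (acth d x) = ph x" using ph_act a by blast
  have "acth (hadd d (dH x)) (bH (ph x)) = acth d (acth (dH x) (bH (ph x)))"
    using acth_add a dH_spec bH ph_K by blast
  also have "\<dots> = acth d x" using dH_spec a by simp
  finally show ?thesis using dH_unique[of "acth d x"] p a acth_Hs hadd_H dH_spec by simp
qed
lemma base_acth: "u \<in> K \<Longrightarrow> m \<in> H \<Longrightarrow> acth m (bH u) \<in> Hs \<and> ph (acth m (bH u)) = u \<and> dH (acth m (bH u)) = m"
proof -
  assume a: "u \<in> K" "m \<in> H"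
  have 1: "acth m (bH u) \<in> Hs" using acth_Hs a bH by blast
  have 2: "ph (acth m (bH u)) = u" using ph_act a bH by auto
  show ?thesis using 1 2 dH_unique[OF 1 a(2)] by simp
qed

lemma spt_mem: "\<gamma> \<in> G \<Longrightarrow> u \<in> K \<Longrightarrow> \<kappa> u \<in> spt \<gamma> \<longleftrightarrow> ev \<gamma> u = e"
proof -
  assume a: "\<gamma> \<in> G" "u \<in> K"
  show ?thesis
  proof
    assume "\<kappa> u \<in> spt \<gamma>"
    then obtain u' where "u' \<in> K" "ev \<gamma> u' = e" "\<kappa> u = \<kappa> u'" unfolding spt_def by blast
    then show "ev \<gamma> u = e" using kinj[OF a(2)] by metis
  next
    assume "ev \<gamma> u = e" then show "\<kappa> u \<in> spt \<gamma>" unfolding spt_def using a by blast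
  qed
qed
lemma spt_G: "\<gamma> \<in> G \<Longrightarrow> spt \<gamma> \<in> std_G n I"
  unfolding spt_def std_G_def using G_fin k_nsub by auto
lemma spt_inj: "\<gamma> \<in> G \<Longrightarrow> \<delta> \<in> G \<Longrightarrow> spt \<gamma> = spt \<delta> \<Longrightarrow> \<gamma> = \<delta>"
proof -
  assume a: "\<gamma> \<in> G" "\<delta> \<in> G" "spt \<gamma> = spt \<delta>"
  have "ev \<gamma> u = ev \<delta> u" if "u \<in> K" for u
    using spt_mem[OF a(1) that] spt_mem[OF a(2) that] a(3) ev_ze[OF a(1) that] ev_ze[OF a(2) that] zne
    by auto
  then show ?thesis using G_inj a by blast
qed
lemma spt_surj: "g \<in> std_G n I \<Longrightarrow> \<exists>\<gamma>\<in>G. spt \<gamma> = g"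
proof -
  assume g: "g \<in> std_G n I"
  define T where "T = {u\<in>K. \<kappa> u \<in> g}"
  have "T \<subseteq> inv_into K \<kappa> ` g"
  proof
    fix u assume "u \<in> T"
    then have "u = inv_into K \<kappa> (\<kappa> u)" "\<kappa> u \<in> g" using kbij bij_betw_inv_into_left unfolding T_def by fastforce+
    then show "u \<in> inv_into K \<kappa> ` g" by (rule image_eqI)
  qed
  moreover have "finite g" using g by (simp add: std_G_def)
  ultimately have fT: "finite T" using finite_subset by blast
  obtain \<gamma> where \<gamma>: "\<gamma> \<in> G" "\<forall>u\<in>K. ev \<gamma> u = (if u \<in> T then e else z)"
    using G_ex[OF fT] T_def by auto
  have "spt \<gamma> = g"
  proof
    show "spt \<gamma> \<subseteq> g"
    proof
      fix s assume "s \<in> spt \<gamma>"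
      then obtain u where u: "u \<in> K" "ev \<gamma> u = e" "s = \<kappa> u" unfolding spt_def by blast
      then have "u \<in> T" using \<gamma>(2) zne by (metis (full_types))
      then show "s \<in> g" using u(3) by (simp add: T_def)
    qed
    show "g \<subseteq> spt \<gamma>"
    proof
      fix s assume "s \<in> g"
      then have "s \<in> nsubsets n I" using g by (auto simp: std_G_def)
      then obtain u where "u \<in> K" "\<kappa> u = s" using k_surj by blast
      then show "s \<in> spt \<gamma>" unfolding spt_def using \<gamma> \<open>s \<in> g\<close> by (auto simp: T_def)
    qed
  qed
  then show ?thesis using \<gamma> by blast
qed
lemma spt_gadd: "\<gamma> \<in> G \<Longrightarrow> \<delta> \<in> G \<Longrightarrow> spt (gadd \<gamma> \<delta>) = symdiff (spt \<gamma>) (spt \<delta>)"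
proof -
  assume a: "\<gamma> \<in> G" "\<delta> \<in> G"
  have ev: "ev (gadd \<gamma> \<delta>) u = e \<longleftrightarrow> (ev \<gamma> u = e) \<noteq> (ev \<delta> u = e)" if "u \<in> K" for u
  proof -
    have "ev (gadd \<gamma> \<delta>) u = hadd (ev \<gamma> u) (ev \<delta> u)" using ev_add a that by blast
    also have "\<dots> = (if ev \<gamma> u = ev \<delta> u then z else e)" using hadd_eq ev_H a that by blast
    finally show ?thesis using ev_ze[OF a(1) that] ev_ze[OF a(2) that] zne by auto
  qed
  show ?thesis
  proof (rule set_eqI)
    fix s
    show "s \<in> spt (gadd \<gamma> \<delta>) \<longleftrightarrow> s \<in> symdiff (spt \<gamma>) (spt \<delta>)"
    proof (cases "\<exists>u\<in>K. \<kappa> u = s")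
      case True
      then obtain u where u: "u \<in> K" "\<kappa> u = s" by blast
      show ?thesis using spt_mem[OF gadd_G[OF a] u(1)] spt_mem[OF a(1) u(1)] spt_mem[OF a(2) u(1)] ev[OF u(1)] u(2)
        by (auto simp: symdiff_def)
    next
      case False
      then show ?thesis unfolding spt_def symdiff_def by auto
    qed
  qed
qed

end


context hsB begin

lemma f_I: "x \<in> I \<Longrightarrow> fmap x = EI x" by (simp add: fmap_def)
lemma f_K: "x \<in> K \<Longrightarrow> fmap x = EK (\<kappa> x)" using disjK by (simp add: fmap_def)
lemma f_H: "x \<in> H \<Longrightarrow> fmap x = EH (x = e)" using disjH by (simp add: fmap_def)
lemma f_G: "x \<in> G \<Longrightarrow> fmap x = EG (spt x)" using disjG by (simp add: fmap_def)
lemma f_Gs: "x \<in> Gs \<Longrightarrow> fmap x = EGs (\<kappa> (pg x)) (spt (dG x))" using disjGs by (simp add: fmap_def)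
lemma f_Hs: "x \<in> Hs \<Longrightarrow> fmap x = EHs (\<kappa> (ph x)) (dH x = e)" using disjHs by (simp add: fmap_def)

lemma f_cases:
  assumes "x \<in> univ M"
  obtains "x \<in> I" "fmap x = EI x" | "x \<in> K" "fmap x = EK (\<kappa> x)" | "x \<in> H" "fmap x = EH (x = e)"
   | "x \<in> G" "fmap x = EG (spt x)" | "x \<in> Gs" "fmap x = EGs (\<kappa> (pg x)) (spt (dG x))"
   | "x \<in> Hs" "fmap x = EHs (\<kappa> (ph x)) (dH x = e)"
  using cover'[OF assms] f_I f_K f_H f_G f_Gs f_Hs by blast

lemma inv_EI: "x \<in> univ M \<Longrightarrow> fmap x = EI i \<longleftrightarrow> x \<in> I \<and> i = x"
  by (erule f_cases) (auto dest: disjI)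
lemma inv_EK: "x \<in> univ M \<Longrightarrow> fmap x = EK s \<longleftrightarrow> x \<in> K \<and> s = \<kappa> x"
  by (erule f_cases) (auto dest: disjK)
lemma inv_EH: "x \<in> univ M \<Longrightarrow> fmap x = EH b \<longleftrightarrow> x \<in> H \<and> b = (x = e)"
  by (erule f_cases) (auto dest: disjH)
lemma inv_EG: "x \<in> univ M \<Longrightarrow> fmap x = EG g \<longleftrightarrow> x \<in> G \<and> g = spt x"
  by (erule f_cases) (auto dest: disjG)
lemma inv_EGs: "x \<in> univ M \<Longrightarrow> fmap x = EGs s g \<longleftrightarrow> x \<in> Gs \<and> s = \<kappa> (pg x) \<and> g = spt (dG x)"
  by (erule f_cases) (auto dest: disjGs)
lemma inv_EHs: "x \<in> univ M \<Longrightarrow> fmap x = EHs s b \<longleftrightarrow> x \<in> Hs \<and> s = \<kappa> (ph x) \<and> b = (dH x = e)"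
  by (erule f_cases) (auto dest: disjHs)

lemmas inv_E = inv_EI inv_EK inv_EH inv_EG inv_EGs inv_EHs

lemma H_eq: "a \<in> H \<Longrightarrow> b \<in> H \<Longrightarrow> (a = e) = (b = e) \<Longrightarrow> a = b"
  using Hze by auto

lemma f_inj: "inj_on fmap (univ M)"
proof
  fix x y assume x: "x \<in> univ M" and y: "y \<in> univ M" and eq: "fmap x = fmap y"
  show "x = y"
  proof (cases rule: f_cases[OF x])
    case 1 then show ?thesis using eq inv_EI[OF y] by auto
  next
    case 2 then show ?thesis using eq inv_EK[OF y] kinj by auto
  next
    case 3 then show ?thesis using eq inv_EH[OF y] H_eq by auto
  next
    case 4 then show ?thesis using eq inv_EG[OF y] spt_inj by auto
  next
    case 5
    then have yy: "y \<in> Gs" "\<kappa> (pg x) = \<kappa> (pg y)" "spt (dG x) = spt (dG y)" using eq inv_EGs[OF y] by auto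
    then have "pg x = pg y" using kinj pg_K 5 by blast
    moreover have "dG x = dG y" using spt_inj dG_spec yy 5 by blast
    ultimately show ?thesis using dG_spec 5 yy by metis
  next
    case 6
    then have yy: "y \<in> Hs" "\<kappa> (ph x) = \<kappa> (ph y)" "(dH x = e) = (dH y = e)" using eq inv_EHs[OF y] by auto
    then have "ph x = ph y" using kinj ph_K 6 by blast
    moreover have "dH x = dH y" using H_eq dH_spec yy 6 by blast
    ultimately show ?thesis using dH_spec 6 yy by metis
  qed
qed

lemma su_EI: "EI i \<in> std_univ n I \<longleftrightarrow> i \<in> I" by (auto simp: std_univ_def)
lemma su_EK: "EK s \<in> std_univ n I \<longleftrightarrow> s \<in> nsubsets n I" by (auto simp: std_univ_def)
lemma su_EH: "EH b \<in> std_univ n I" by (auto simp: std_univ_def)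
lemma su_EG: "EG g \<in> std_univ n I \<longleftrightarrow> g \<in> std_G n I" by (auto simp: std_univ_def)
lemma su_EGs: "EGs s g \<in> std_univ n I \<longleftrightarrow> s \<in> nsubsets n I \<and> g \<in> std_G n I" by (auto simp: std_univ_def)
lemma su_EHs: "EHs s b \<in> std_univ n I \<longleftrightarrow> s \<in> nsubsets n I" by (auto simp: std_univ_def)

lemma imgI: "fmap x = y \<Longrightarrow> x \<in> univ M \<Longrightarrow> y \<in> fmap ` univ M" by blast

lemma f_image: "fmap ` univ M = std_univ n I"
proof
  show "fmap ` univ M \<subseteq> std_univ n I"
  proof
    fix y assume "y \<in> fmap ` univ M"
    then obtain x where x: "x \<in> univ M" "y = fmap x" by blast
    show "y \<in> std_univ n I"
    proof (cases rule: f_cases[OF x(1)])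
      case 1 then show ?thesis using x by (simp add: su_EI)
    next
      case 2 then show ?thesis using x k_nsub by (simp add: su_EK)
    next
      case 3 then show ?thesis using x by (simp add: su_EH)
    next
      case 4 then show ?thesis using x spt_G by (simp add: su_EG)
    next
      case 5 then show ?thesis using x k_nsub[OF pg_K] spt_G[OF conjunct1[OF dG_spec]] by (simp add: su_EGs)
    next
      case 6 then show ?thesis using x k_nsub[OF ph_K] by (simp add: su_EHs)
    qed
  qed
  show "std_univ n I \<subseteq> fmap ` univ M"
  proof
    fix y assume y: "y \<in> std_univ n I"
    show "y \<in> fmap ` univ M"
    proof (cases y)
      case (EI i)
      then have "i \<in> I" using y by (simp add: su_EI)
      then show ?thesis using EI by (intro imgI[of i]) (auto simp: f_I I_univ)
    next
      case (EK s)
      then have "s \<in> nsubsets n I" using y by (simp add: su_EK)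
      then obtain u where "u \<in> K" "\<kappa> u = s" using k_surj by blast
      then show ?thesis using EK by (intro imgI[of u]) (auto simp: f_K K_univ)
    next
      case (EH b)
      have "fmap (if b then e else z) = EH b" using f_H z_H e_H zne by auto
      then show ?thesis using EH H_univ z_H e_H by (intro imgI[of "if b then e else z"]) auto
    next
      case (EG g)
      then have "g \<in> std_G n I" using y by (simp add: su_EG)
      then obtain \<gamma> where "\<gamma> \<in> G" "spt \<gamma> = g" using spt_surj by blast
      then show ?thesis using EG by (intro imgI[of \<gamma>]) (auto simp: f_G G_univ)
    next
      case (EGs s g)
      then have "s \<in> nsubsets n I" "g \<in> std_G n I" using y by (simp_all add: su_EGs)
      then obtain u \<gamma> where u: "u \<in> K" "\<kappa> u = s" "\<gamma> \<in> G" "spt \<gamma> = g" using k_surj spt_surj by metis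
      have b: "actg \<gamma> (bG u) \<in> Gs \<and> pg (actg \<gamma> (bG u)) = u \<and> dG (actg \<gamma> (bG u)) = \<gamma>" by (rule base_act[OF u(1,3)])
      have "fmap (actg \<gamma> (bG u)) = EGs s g" using b f_Gs u by simp
      then show ?thesis using EGs Gs_univ b by (intro imgI[of "actg \<gamma> (bG u)"]) auto
    next
      case (EHs s b)
      then have "s \<in> nsubsets n I" using y by (simp add: su_EHs)
      then obtain u where u: "u \<in> K" "\<kappa> u = s" using k_surj by metis
      define m where "m = (if b then e else z)"
      have mH: "m \<in> H" using m_def z_H e_H by auto
      have bb: "acth m (bH u) \<in> Hs \<and> ph (acth m (bH u)) = u \<and> dH (acth m (bH u)) = m" by (rule base_acth[OF u(1) mH])
      have "fmap (acth m (bH u)) = EHs s b" using bb f_Hs u m_def zne by auto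
      then show ?thesis using EHs Hs_univ bb by (intro imgI[of "acth m (bH u)"]) auto
    qed
  qed
qed

lemma f_bij: "bij_betw fmap (univ M) (std_univ n I)"
  using f_inj f_image by (simp add: bij_betw_def)

end

context hsB begin

lemma std_len: "std_rel n J S ys \<Longrightarrow> length ys = hs_arity n S"
  by (cases S) auto

lemma len1: "length xs = Suc 0 \<Longrightarrow> \<exists>a. xs = [a]" by (cases xs) auto
lemma len2: "length xs = Suc (Suc 0) \<Longrightarrow> \<exists>a b. xs = [a, b]" by (cases xs; cases "tl xs") auto
lemma len3: "length xs = Suc (Suc (Suc 0)) \<Longrightarrow> \<exists>a b c. xs = [a, b, c]"
  by (cases xs; cases "tl xs"; cases "tl (tl xs)") auto

lemma Qchar:
  assumes xs: "set xs \<subseteq> Gs" "length xs = n" and y: "y \<in> Hs"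
    and c: "compat_idx n I (map (\<kappa> \<circ> pg) xs) (\<kappa> (ph y))"
  shows "rel M SQ (xs @ [y]) \<longleftrightarrow> ((dH y = e) \<longleftrightarrow> odd (length (filter (\<lambda>x. ev (dG x) (ph y) = e) xs)))"
proof -
  define us where "us = map pg xs"
  define ds where "ds = map dG xs"
  define v where "v = ph y"
  define m where "m = dH y"
  have usK: "set us \<subseteq> K" using xs pg_K by (auto simp: us_def)
  have vK: "v \<in> K" using y ph_K by (simp add: v_def)
  have dsG: "set ds \<subseteq> G" using xs dG_spec by (auto simp: ds_def)
  have mH: "m \<in> H" using y dH_spec by (simp add: m_def)
  have cu: "map \<kappa> us = map (\<kappa> \<circ> pg) xs" by (simp add: us_def)
  have base: "rel M SQ (map bG us @ [bH v])"
    using Qbase[of us v] xs usK vK c cu by (simp add: us_def v_def)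
  have bGs: "set (map bG us) \<subseteq> Gs" using usK bG by auto
  have cb: "map (\<kappa> \<circ> pg) (map bG us) = map \<kappa> us"
  proof -
    have "map (\<kappa> \<circ> pg) (map bG us) = map (\<lambda>u. \<kappa> (pg (bG u))) us" by simp
    also have "\<dots> = map \<kappa> us" using usK bG by (intro map_cong) auto
    finally show ?thesis .
  qed
  have bHv: "bH v \<in> Hs" "ph (bH v) = v" using bH vK by auto
  have eqv: "(rel M SQ (map2 actg ds (map bG us) @ [acth m (bH v)]) \<longleftrightarrow> rel M SQ (map bG us @ [bH v]))
          \<longleftrightarrow> foldr hadd (map (\<lambda>\<gamma>. ev \<gamma> (ph (bH v))) ds @ [m]) z = z"
  proof -
    have pre: "length (map bG us) = n \<and> length ds = n \<and> set (map bG us) \<subseteq> Gs \<and> bH v \<in> Hs \<and> set ds \<subseteq> G \<and> m \<in> H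
      \<and> compat_idx n I (map (\<kappa> \<circ> pg) (map bG us)) (\<kappa> (ph (bH v)))"
    proof -
      have "compat_idx n I (map (\<kappa> \<circ> pg) (map bG us)) (\<kappa> (ph (bH v)))"
        unfolding cb cu bHv(2) using c by (simp add: v_def)
      moreover have "length (map bG us) = n" "length ds = n" using xs by (simp_all add: us_def ds_def)
      ultimately show ?thesis using bGs bHv dsG mH by blast
    qed
    show ?thesis using mp[OF spec[OF spec[OF spec[OF spec[OF Qequi, of "map bG us"], of "bH v"], of ds], of m] pre] .
  qed
  have m2: "map2 actg ds (map bG us) = xs"
  proof (rule nth_equalityI)
    show "length (map2 actg ds (map bG us)) = length xs" by (simp add: us_def ds_def)
    fix i assume "i < length (map2 actg ds (map bG us))"
    then have i: "i < length xs" by (simp add: us_def ds_def)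
    then have "xs ! i \<in> Gs" using xs by auto
    then show "map2 actg ds (map bG us) ! i = xs ! i" using i dG_spec by (simp add: us_def ds_def)
  qed
  have ay: "acth m (bH v) = y" using dH_spec y by (simp add: m_def v_def)
  have q: "rel M SQ (xs @ [y]) \<longleftrightarrow> foldr hadd (map (\<lambda>\<gamma>. ev \<gamma> v) ds @ [m]) z = z"
    using eqv base m2 ay bHv by simp
  have LH: "set (map (\<lambda>\<gamma>. ev \<gamma> v) ds @ [m]) \<subseteq> H" using dsG mH ev_H vK by auto
  have cnt: "length (filter (\<lambda>a. a = e) (map (\<lambda>\<gamma>. ev \<gamma> v) ds @ [m]))
      = length (filter (\<lambda>x. ev (dG x) v = e) xs) + (if m = e then 1 else 0)"
    by (simp add: ds_def filter_map o_def)
  have r1: "rel M SQ (xs @ [y]) \<longleftrightarrow> even (length (filter (\<lambda>a. a = e) (map (\<lambda>\<gamma>. ev \<gamma> v) ds @ [m])))"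
    using q parity[OF LH] by blast
  then have r2: "rel M SQ (xs @ [y]) \<longleftrightarrow> even (length (filter (\<lambda>x. ev (dG x) v = e) xs) + (if m = e then 1 else 0))"
    unfolding cnt .
  show ?thesis using r2 unfolding m_def[symmetric] v_def[symmetric] by (cases "m = e") auto
qed

end

context hsB begin

lemma relI: "rel M SI [a] \<longleftrightarrow> a \<in> I" by (simp add: I_def sort_iff)
lemma relK: "rel M SK [a] \<longleftrightarrow> a \<in> K" by (simp add: K_def sort_iff)
lemma relH: "rel M SH [a] \<longleftrightarrow> a \<in> H" by (simp add: H_def sort_iff)
lemma relG: "rel M SG [a] \<longleftrightarrow> a \<in> G" by (simp add: G_def sort_iff)
lemma relGs: "rel M SGs [a] \<longleftrightarrow> a \<in> Gs" by (simp add: Gs_def sort_iff)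
lemma relHs: "rel M SHs [a] \<longleftrightarrow> a \<in> Hs" by (simp add: Hs_def sort_iff)

lemma Heq_iff: "x \<in> H \<Longrightarrow> (c = x \<longleftrightarrow> c \<in> H \<and> ((c = e) = (x = e)))"
  using H_eq by blast
lemma hadd_e: "a \<in> H \<Longrightarrow> b \<in> H \<Longrightarrow> (hadd a b = e \<longleftrightarrow> (a = e) \<noteq> (b = e))"
  using hadd_eq Hze zne by auto

lemma act_iff: "d \<in> G \<Longrightarrow> x \<in> Gs \<Longrightarrow> y = actg d x \<longleftrightarrow> y \<in> Gs \<and> pg y = pg x \<and> dG y = gadd d (dG x)"
proof
  assume a: "d \<in> G" "x \<in> Gs" "y = actg d x"
  then show "y \<in> Gs \<and> pg y = pg x \<and> dG y = gadd d (dG x)" using actg_Gs pg_act dG_act by blast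
next
  assume a: "d \<in> G" "x \<in> Gs" and b: "y \<in> Gs \<and> pg y = pg x \<and> dG y = gadd d (dG x)"
  have "y = actg (dG y) (bG (pg y))" using dG_spec[of y] b by (simp only: eq_commute)
  also have "\<dots> = actg (gadd d (dG x)) (bG (pg x))" using b by simp
  also have "\<dots> = actg d (actg (dG x) (bG (pg x)))" using act_add a dG_spec bG pg_K by blast
  also have "\<dots> = actg d x" using dG_spec a by simp
  finally show "y = actg d x" .
qed

lemma acth_iff: "d \<in> H \<Longrightarrow> x \<in> Hs \<Longrightarrow> y = acth d x \<longleftrightarrow> y \<in> Hs \<and> ph y = ph x \<and> dH y = hadd d (dH x)"
proof
  assume a: "d \<in> H" "x \<in> Hs" "y = acth d x"
  then show "y \<in> Hs \<and> ph y = ph x \<and> dH y = hadd d (dH x)" using acth_Hs ph_act dH_act by blast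
next
  assume a: "d \<in> H" "x \<in> Hs" and b: "y \<in> Hs \<and> ph y = ph x \<and> dH y = hadd d (dH x)"
  have "y = acth (dH y) (bH (ph y))" using dH_spec[of y] b by (simp only: eq_commute)
  also have "\<dots> = acth (hadd d (dH x)) (bH (ph x))" using b by simp
  also have "\<dots> = acth d (acth (dH x) (bH (ph x)))" using acth_add a dH_spec bH ph_K by blast
  also have "\<dots> = acth d x" using dH_spec a by simp
  finally show "y = acth d x" .
qed

lemma r_SI: "a \<in> univ M \<Longrightarrow> rel M SI [a] \<longleftrightarrow> std_rel n I SI [fmap a]"
  by (simp add: relI inv_E)
lemma r_SK: "a \<in> univ M \<Longrightarrow> rel M SK [a] \<longleftrightarrow> std_rel n I SK [fmap a]"
  using k_nsub by (auto simp add: relK inv_E)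
lemma r_SH: "a \<in> univ M \<Longrightarrow> rel M SH [a] \<longleftrightarrow> std_rel n I SH [fmap a]"
  by (simp add: relH inv_E)
lemma r_SG: "a \<in> univ M \<Longrightarrow> rel M SG [a] \<longleftrightarrow> std_rel n I SG [fmap a]"
  using spt_G by (auto simp add: relG inv_E)
lemma r_SGs: "a \<in> univ M \<Longrightarrow> rel M SGs [a] \<longleftrightarrow> std_rel n I SGs [fmap a]"
  using spt_G dG_spec k_nsub pg_K by (auto simp add: relGs inv_E)
lemma r_SHs: "a \<in> univ M \<Longrightarrow> rel M SHs [a] \<longleftrightarrow> std_rel n I SHs [fmap a]"
  using k_nsub ph_K by (auto simp add: relHs inv_E)

lemma r_SMem: "a \<in> univ M \<Longrightarrow> b \<in> univ M \<Longrightarrow> rel M SMem [a, b] \<longleftrightarrow> std_rel n I SMem [fmap a, fmap b]"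
proof -
  assume u: "a \<in> univ M" "b \<in> univ M"
  have "rel M SMem [a, b] \<longleftrightarrow> a \<in> I \<and> b \<in> K \<and> a \<in> \<kappa> b" using memrel k_mem by blast
  moreover have "std_rel n I SMem [fmap a, fmap b] \<longleftrightarrow> a \<in> I \<and> b \<in> K \<and> a \<in> \<kappa> b \<and> \<kappa> b \<in> nsubsets n I"
    using u by (simp add: inv_E) blast
  ultimately show ?thesis using k_nsub by blast
qed

lemma r_SHAdd: "a \<in> univ M \<Longrightarrow> b \<in> univ M \<Longrightarrow> c \<in> univ M \<Longrightarrow>
   rel M SHAdd [a, b, c] \<longleftrightarrow> std_rel n I SHAdd [fmap a, fmap b, fmap c]"
proof -
  assume u: "a \<in> univ M" "b \<in> univ M" "c \<in> univ M"
  have 1: "rel M SHAdd [a, b, c] \<longleftrightarrow> a \<in> H \<and> b \<in> H \<and> c = hadd a b" by (rule g2[OF haddg])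
  have 2: "std_rel n I SHAdd [fmap a, fmap b, fmap c] \<longleftrightarrow> a \<in> H \<and> b \<in> H \<and> c \<in> H \<and> (c = e) = ((a = e) \<noteq> (b = e))"
    using u by (simp add: inv_E) blast
  show ?thesis unfolding 1 2
  proof (cases "a \<in> H \<and> b \<in> H")
    case True
    then have "c = hadd a b \<longleftrightarrow> c \<in> H \<and> ((c = e) = ((a = e) \<noteq> (b = e)))"
      using Heq_iff[OF hadd_H[of a b]] hadd_e[of a b] by simp
    then show "(a \<in> H \<and> b \<in> H \<and> c = hadd a b) = (a \<in> H \<and> b \<in> H \<and> c \<in> H \<and> (c = e) = ((a = e) \<noteq> (b = e)))"
      using True by simp
  qed auto
qed

lemma r_SGAdd: "a \<in> univ M \<Longrightarrow> b \<in> univ M \<Longrightarrow> c \<in> univ M \<Longrightarrow>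
   rel M SGAdd [a, b, c] \<longleftrightarrow> std_rel n I SGAdd [fmap a, fmap b, fmap c]"
proof -
  assume u: "a \<in> univ M" "b \<in> univ M" "c \<in> univ M"
  have 1: "rel M SGAdd [a, b, c] \<longleftrightarrow> a \<in> G \<and> b \<in> G \<and> c = gadd a b" by (rule g2[OF gaddg])
  have 2: "std_rel n I SGAdd [fmap a, fmap b, fmap c] \<longleftrightarrow> a \<in> G \<and> b \<in> G \<and> c \<in> G \<and> spt c = symdiff (spt a) (spt b)"
    using u spt_G by (simp add: inv_E) blast
  show ?thesis unfolding 1 2
  proof (cases "a \<in> G \<and> b \<in> G")
    case True
    then have "c = gadd a b \<longleftrightarrow> c \<in> G \<and> spt c = symdiff (spt a) (spt b)"
      using spt_gadd[of a b] spt_inj[of c "gadd a b"] gadd_G[of a b] by auto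
    then show "(a \<in> G \<and> b \<in> G \<and> c = gadd a b) = (a \<in> G \<and> b \<in> G \<and> c \<in> G \<and> spt c = symdiff (spt a) (spt b))"
      using True by simp
  qed auto
qed

lemma r_SEv: "a \<in> univ M \<Longrightarrow> b \<in> univ M \<Longrightarrow> c \<in> univ M \<Longrightarrow>
   rel M SEv [a, b, c] \<longleftrightarrow> std_rel n I SEv [fmap a, fmap b, fmap c]"
proof -
  assume u: "a \<in> univ M" "b \<in> univ M" "c \<in> univ M"
  have 1: "rel M SEv [a, b, c] \<longleftrightarrow> a \<in> G \<and> b \<in> K \<and> c = ev a b" by (rule g2[OF evg])
  have 2: "std_rel n I SEv [fmap a, fmap b, fmap c] \<longleftrightarrow> a \<in> G \<and> b \<in> K \<and> c \<in> H \<and> (c = e) = (\<kappa> b \<in> spt a)"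
    using u spt_G k_nsub by (simp add: inv_E) blast
  show ?thesis unfolding 1 2
  proof (cases "a \<in> G \<and> b \<in> K")
    case True
    then have "c = ev a b \<longleftrightarrow> c \<in> H \<and> ((c = e) = (\<kappa> b \<in> spt a))"
      using spt_mem[of a b] Heq_iff[OF ev_H[of a b]] by simp
    then show "(a \<in> G \<and> b \<in> K \<and> c = ev a b) = (a \<in> G \<and> b \<in> K \<and> c \<in> H \<and> (c = e) = (\<kappa> b \<in> spt a))"
      using True by simp
  qed auto
qed

lemma Gs_facts: "a \<in> Gs \<Longrightarrow> \<kappa> (pg a) \<in> nsubsets n I \<and> spt (dG a) \<in> std_G n I"
  using k_nsub pg_K spt_G dG_spec by blast
lemma Hs_facts: "a \<in> Hs \<Longrightarrow> \<kappa> (ph a) \<in> nsubsets n I"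
  using k_nsub ph_K by blast

lemma r_SSupp: "a \<in> univ M \<Longrightarrow> b \<in> univ M \<Longrightarrow> rel M SSupp [a, b] \<longleftrightarrow> std_rel n I SSupp [fmap a, fmap b]"
proof -
  assume u: "a \<in> univ M" "b \<in> univ M"
  have 2: "std_rel n I SSupp [fmap a, fmap b] \<longleftrightarrow> a \<in> G \<and> b \<in> K \<and> \<kappa> b \<in> spt a"
    using u spt_G k_nsub by (simp add: inv_E) blast
  have 1: "rel M SSupp [a, b] \<longleftrightarrow> a \<in> G \<and> b \<in> K \<and> ev a b = e" using supp by blast
  show ?thesis unfolding 1 2
  proof (cases "a \<in> G \<and> b \<in> K")
    case True then show "(a \<in> G \<and> b \<in> K \<and> ev a b = e) = (a \<in> G \<and> b \<in> K \<and> \<kappa> b \<in> spt a)"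
      using spt_mem[of a b] by simp
  qed auto
qed

lemma r_SPG: "a \<in> univ M \<Longrightarrow> b \<in> univ M \<Longrightarrow> rel M SPG [a, b] \<longleftrightarrow> std_rel n I SPG [fmap a, fmap b]"
proof -
  assume u: "a \<in> univ M" "b \<in> univ M"
  have 1: "rel M SPG [a, b] \<longleftrightarrow> a \<in> Gs \<and> b = pg a" by (rule g1[OF pgg])
  have 2: "std_rel n I SPG [fmap a, fmap b] \<longleftrightarrow> a \<in> Gs \<and> b \<in> K \<and> \<kappa> (pg a) = \<kappa> b"
    using u by (auto simp add: inv_E dest: Gs_facts)
  show ?thesis unfolding 1 2
  proof (cases "a \<in> Gs")
    case True then show "(a \<in> Gs \<and> b = pg a) = (a \<in> Gs \<and> b \<in> K \<and> \<kappa> (pg a) = \<kappa> b)"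
      using kinj[of b "pg a"] pg_K[of a] by auto
  qed auto
qed

lemma r_SPH: "a \<in> univ M \<Longrightarrow> b \<in> univ M \<Longrightarrow> rel M SPH [a, b] \<longleftrightarrow> std_rel n I SPH [fmap a, fmap b]"
proof -
  assume u: "a \<in> univ M" "b \<in> univ M"
  have 1: "rel M SPH [a, b] \<longleftrightarrow> a \<in> Hs \<and> b = ph a" by (rule g1[OF phg])
  have 2: "std_rel n I SPH [fmap a, fmap b] \<longleftrightarrow> a \<in> Hs \<and> b \<in> K \<and> \<kappa> (ph a) = \<kappa> b"
    using u by (auto simp add: inv_E dest: Hs_facts)
  show ?thesis unfolding 1 2
  proof (cases "a \<in> Hs")
    case True then show "(a \<in> Hs \<and> b = ph a) = (a \<in> Hs \<and> b \<in> K \<and> \<kappa> (ph a) = \<kappa> b)"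
      using kinj[of b "ph a"] ph_K[of a] by auto
  qed auto
qed

lemma r_SActG: "a \<in> univ M \<Longrightarrow> b \<in> univ M \<Longrightarrow> c \<in> univ M \<Longrightarrow>
   rel M SActG [a, b, c] \<longleftrightarrow> std_rel n I SActG [fmap a, fmap b, fmap c]"
proof -
  assume u: "a \<in> univ M" "b \<in> univ M" "c \<in> univ M"
  have 1: "rel M SActG [a, b, c] \<longleftrightarrow> a \<in> G \<and> b \<in> Gs \<and> c = actg a b" by (rule g2[OF actgg])
  have 2: "std_rel n I SActG [fmap a, fmap b, fmap c] \<longleftrightarrow> a \<in> G \<and> b \<in> Gs \<and> c \<in> Gs \<and> \<kappa> (pg c) = \<kappa> (pg b)
      \<and> spt (dG c) = symdiff (spt a) (spt (dG b))"
    using u spt_G by (auto simp add: inv_E dest: Gs_facts)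
  show ?thesis unfolding 1 2
  proof (cases "a \<in> G \<and> b \<in> Gs")
    case True
    have A: "c = actg a b \<longleftrightarrow> c \<in> Gs \<and> pg c = pg b \<and> dG c = gadd a (dG b)" using act_iff[of a b c] True by simp
    have B:  "c \<in> Gs \<Longrightarrow> pg c = pg b \<longleftrightarrow> \<kappa> (pg c) = \<kappa> (pg b)"
    proof -
      assume c: "c \<in> Gs"
      have "pg c \<in> K" "pg b \<in> K" using pg_K c True by auto
      then show ?thesis using kinj by metis
    qed
    have C:  "c \<in> Gs \<Longrightarrow> dG c = gadd a (dG b) \<longleftrightarrow> spt (dG c) = symdiff (spt a) (spt (dG b))"
    proof -
      assume c: "c \<in> Gs"
      have g1: "dG c \<in> G" using dG_spec c by blast
      have g2: "gadd a (dG b) \<in> G" using gadd_G True dG_spec by blast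
      have "spt (gadd a (dG b)) = symdiff (spt a) (spt (dG b))" using spt_gadd True dG_spec by blast
      moreover have "dG c = gadd a (dG b) \<longleftrightarrow> spt (dG c) = spt (gadd a (dG b))"
        using spt_inj[OF g1 g2] by (intro iffI) simp_all
      ultimately show ?thesis by simp
    qed
    have D: "c = actg a b \<longleftrightarrow> c \<in> Gs \<and> \<kappa> (pg c) = \<kappa> (pg b) \<and> spt (dG c) = symdiff (spt a) (spt (dG b))"
    proof (cases "c \<in> Gs")
      case True then show ?thesis using A B C by simp
    next
      case False then show ?thesis using A by simp
    qed
    show "(a \<in> G \<and> b \<in> Gs \<and> c = actg a b) = (a \<in> G \<and> b \<in> Gs \<and> c \<in> Gs \<and> \<kappa> (pg c) = \<kappa> (pg b)
      \<and> spt (dG c) = symdiff (spt a) (spt (dG b)))" using True D by simp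
  qed auto
qed

lemma r_SActH: "a \<in> univ M \<Longrightarrow> b \<in> univ M \<Longrightarrow> c \<in> univ M \<Longrightarrow>
   rel M SActH [a, b, c] \<longleftrightarrow> std_rel n I SActH [fmap a, fmap b, fmap c]"
proof -
  assume u: "a \<in> univ M" "b \<in> univ M" "c \<in> univ M"
  have 1: "rel M SActH [a, b, c] \<longleftrightarrow> a \<in> H \<and> b \<in> Hs \<and> c = acth a b" by (rule g2[OF acthg])
  have 2: "std_rel n I SActH [fmap a, fmap b, fmap c] \<longleftrightarrow> a \<in> H \<and> b \<in> Hs \<and> c \<in> Hs \<and> \<kappa> (ph c) = \<kappa> (ph b)
      \<and> (dH c = e) = ((a = e) \<noteq> (dH b = e))"
    using u by (auto simp add: inv_E dest: Hs_facts)
  show ?thesis unfolding 1 2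
  proof (cases "a \<in> H \<and> b \<in> Hs")
    case True
    have A: "c = acth a b \<longleftrightarrow> c \<in> Hs \<and> ph c = ph b \<and> dH c = hadd a (dH b)" using acth_iff[of a b c] True by simp
    have B:  "c \<in> Hs \<Longrightarrow> ph c = ph b \<longleftrightarrow> \<kappa> (ph c) = \<kappa> (ph b)"
    proof -
      assume c: "c \<in> Hs"
      have "ph c \<in> K" "ph b \<in> K" using ph_K c True by auto
      then show ?thesis using kinj by metis
    qed
    have C:  "c \<in> Hs \<Longrightarrow> dH c = hadd a (dH b) \<longleftrightarrow> (dH c = e) = ((a = e) \<noteq> (dH b = e))"
    proof -
      assume c: "c \<in> Hs"
      have h1: "dH c \<in> H" using dH_spec c by blast
      have h2: "dH b \<in> H" using dH_spec True by blast
      have "dH c = hadd a (dH b) \<longleftrightarrow> (dH c = e) = (hadd a (dH b) = e)"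
        using Heq_iff[OF hadd_H[OF _ h2], of a "dH c"] h1 True by simp
      also have "(hadd a (dH b) = e) = ((a = e) \<noteq> (dH b = e))" using hadd_e[OF _ h2, of a] True by simp
      finally show ?thesis .
    qed
    have D: "c = acth a b \<longleftrightarrow> c \<in> Hs \<and> \<kappa> (ph c) = \<kappa> (ph b) \<and> (dH c = e) = ((a = e) \<noteq> (dH b = e))"
    proof (cases "c \<in> Hs")
      case True then show ?thesis using A B C by simp
    next
      case False then show ?thesis using A by simp
    qed
    show "(a \<in> H \<and> b \<in> Hs \<and> c = acth a b) = (a \<in> H \<and> b \<in> Hs \<and> c \<in> Hs \<and> \<kappa> (ph c) = \<kappa> (ph b)
      \<and> (dH c = e) = ((a = e) \<noteq> (dH b = e)))" using True D by simp
  qed auto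
qed

end

context hsB begin

lemma cnt_conv: "set xs \<subseteq> Gs \<Longrightarrow> v \<in> K \<Longrightarrow>
  length (filter (\<lambda>\<gamma>. \<kappa> v \<in> \<gamma>) (map (spt \<circ> dG) xs)) = length (filter (\<lambda>x. ev (dG x) v = e) xs)"
proof -
  assume a: "set xs \<subseteq> Gs" "v \<in> K"
  have "filter (\<lambda>\<gamma>. \<kappa> v \<in> \<gamma>) (map (spt \<circ> dG) xs) = map (spt \<circ> dG) (filter (\<lambda>x. \<kappa> v \<in> spt (dG x)) xs)"
    by (simp add: filter_map o_def)
  also have "filter (\<lambda>x. \<kappa> v \<in> spt (dG x)) xs = filter (\<lambda>x. ev (dG x) v = e) xs"
  proof (rule filter_cong)
    fix x assume "x \<in> set xs"
    then have "dG x \<in> G" using a dG_spec by blast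
    then show "(\<kappa> v \<in> spt (dG x)) = (ev (dG x) v = e)" using spt_mem a(2) by blast
  qed simp
  finally have "filter (\<lambda>\<gamma>. \<kappa> v \<in> \<gamma>) (map (spt \<circ> dG) xs) = map (spt \<circ> dG) (filter (\<lambda>x. ev (dG x) v = e) xs)" .
  then show ?thesis by (metis length_map)
qed

lemma r_SQ: "set zs \<subseteq> univ M \<Longrightarrow> rel M SQ zs \<longleftrightarrow> std_rel n I SQ (map fmap zs)"
proof
  assume zu: "set zs \<subseteq> univ M" and r: "rel M SQ zs"
  then obtain xs y where xy: "zs = xs @ [y]" "length xs = n" "set xs \<subseteq> Gs" "y \<in> Hs"
     "compat_idx n I (map (\<kappa> \<circ> pg) xs) (\<kappa> (ph y))" using Qcomp by blast
  have mf: "map fmap xs = map2 EGs (map (\<kappa> \<circ> pg) xs) (map (spt \<circ> dG) xs)"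
  proof (rule nth_equalityI)
    show "length (map fmap xs) = length (map2 EGs (map (\<kappa> \<circ> pg) xs) (map (spt \<circ> dG) xs))" by simp
    fix i assume "i < length (map fmap xs)"
    then have i: "i < length xs" by simp
    then have "xs ! i \<in> Gs" using xy(3) by auto
    then show "map fmap xs ! i = map2 EGs (map (\<kappa> \<circ> pg) xs) (map (spt \<circ> dG) xs) ! i" using i f_Gs by simp
  qed
  have vK: "ph y \<in> K" using ph_K xy(4) by blast
  have q: "(dH y = e) = odd (length (filter (\<lambda>x. ev (dG x) (ph y) = e) xs))"
    using Qchar[OF xy(3,2,4,5)] r xy(1) by simp
  have m: "(dH y = e) = odd (length (filter (\<lambda>\<gamma>. \<kappa> (ph y) \<in> \<gamma>) (map (spt \<circ> dG) xs)))"
    using q cnt_conv[OF xy(3) vK] by simp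
  have s1: "set (map (\<kappa> \<circ> pg) xs) \<subseteq> nsubsets n I" using xy(3) Gs_facts by auto
  have s2: "set (map (spt \<circ> dG) xs) \<subseteq> std_G n I" using xy(3) Gs_facts by auto
  have s3: "\<kappa> (ph y) \<in> nsubsets n I" using Hs_facts xy(4) by blast
  have ex: "\<exists>us \<gamma>s v m. length us = n \<and> length \<gamma>s = n \<and>
        set us \<subseteq> nsubsets n I \<and> set \<gamma>s \<subseteq> std_G n I \<and> v \<in> nsubsets n I \<and>
        compat_idx n I us v \<and>
        m = odd (length (filter (\<lambda>\<gamma>. v \<in> \<gamma>) \<gamma>s)) \<and>
        map fmap zs = map2 EGs us \<gamma>s @ [EHs v m]"
    apply (rule exI[of _ "map (\<kappa> \<circ> pg) xs"], rule exI[of _ "map (spt \<circ> dG) xs"],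
           rule exI[of _ "\<kappa> (ph y)"], rule exI[of _ "dH y = e"])
    using xy s1 s2 s3 m mf f_Hs by simp
  then show "std_rel n I SQ (map fmap zs)" by simp
next
  assume zu: "set zs \<subseteq> univ M" and s: "std_rel n I SQ (map fmap zs)"
  have "\<exists>us \<gamma>s v m. length us = n \<and> length \<gamma>s = n \<and>
        set us \<subseteq> nsubsets n I \<and> set \<gamma>s \<subseteq> std_G n I \<and> v \<in> nsubsets n I \<and>
        compat_idx n I us v \<and>
        m = odd (length (filter (\<lambda>\<gamma>. v \<in> \<gamma>) \<gamma>s)) \<and>
        map fmap zs = map2 EGs us \<gamma>s @ [EHs v m]" using s by (simp only: std_rel.simps)
  then obtain us \<gamma>s v m where c: "length us = n" "length \<gamma>s = n"
        "set us \<subseteq> nsubsets n I" "set \<gamma>s \<subseteq> std_G n I" "v \<in> nsubsets n I"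
        "compat_idx n I us v" "m = odd (length (filter (\<lambda>\<gamma>. v \<in> \<gamma>) \<gamma>s))"
        and meq: "map fmap zs = map2 EGs us \<gamma>s @ [EHs v m]" by blast
  have "zs \<noteq> []" using meq by auto
  define xs where "xs = butlast zs"
  define y where "y = last zs"
  have zxy: "zs = xs @ [y]" using \<open>zs \<noteq> []\<close> by (simp add: xs_def y_def)
  have meq2: "map fmap xs = map2 EGs us \<gamma>s" "fmap y = EHs v m" using meq zxy by simp_all
  have lx: "length xs = n" using arg_cong[OF meq2(1), of length] c(1,2) by simp
  have xu: "set xs \<subseteq> univ M" "y \<in> univ M" using zu zxy by auto
  have nth: "xs ! i \<in> Gs \<and> us ! i = \<kappa> (pg (xs ! i)) \<and> \<gamma>s ! i = spt (dG (xs ! i))" if i: "i < n" for i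
  proof -
    have "map fmap xs ! i = map2 EGs us \<gamma>s ! i" using meq2(1) by simp
    then have "fmap (xs ! i) = EGs (us ! i) (\<gamma>s ! i)" using i lx c(1,2) by simp
    moreover have "xs ! i \<in> univ M" using xu(1) i lx by auto
    ultimately show ?thesis using inv_EGs by blast
  qed
  have xsG: "set xs \<subseteq> Gs"
  proof
    fix x assume "x \<in> set xs"
    then obtain i where "i < length xs" "x = xs ! i" by (auto simp: in_set_conv_nth)
    then show "x \<in> Gs" using nth lx by auto
  qed
  have usx: "us = map (\<kappa> \<circ> pg) xs" by (rule nth_equalityI) (use c(1) lx nth in auto)
  have gsx: "\<gamma>s = map (spt \<circ> dG) xs" by (rule nth_equalityI) (use c(2) lx nth in auto)
  have yy: "y \<in> Hs" "v = \<kappa> (ph y)" "m = (dH y = e)" using inv_EHs[OF xu(2), of v m] meq2(2) by simp_all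
  have cc: "compat_idx n I (map (\<kappa> \<circ> pg) xs) (\<kappa> (ph y))" using c(6) usx yy by simp
  have vK: "ph y \<in> K" using ph_K yy(1) by blast
  have "(dH y = e) = odd (length (filter (\<lambda>x. ev (dG x) (ph y) = e) xs))"
    using c(7) yy gsx cnt_conv[OF xsG vK] by simp
  then show "rel M SQ zs" using Qchar[OF xsG lx yy(1) cc] zxy by simp
qed

lemma f_rel: "set xs \<subseteq> univ M \<Longrightarrow> rel M r xs \<longleftrightarrow> std_rel n I r (map fmap xs)"
proof -
  assume u: "set xs \<subseteq> univ M"
  show ?thesis
  proof (cases "length xs = hs_arity n r")
    case False
    have "\<not> rel M r xs" using rel_len[of r xs] False by blast
    moreover have "\<not> std_rel n I r (map fmap xs)" using std_len[of I r "map fmap xs"] False by auto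
    ultimately show ?thesis by blast
  next
    case True
    show ?thesis
    proof (cases r)
      case SI then obtain a where "xs = [a]" using True len1[of xs] by auto
      then show ?thesis using u by (simp add: SI r_SI)
    next
      case SK then obtain a where "xs = [a]" using True len1[of xs] by auto
      then show ?thesis using u by (simp add: SK r_SK)
    next
      case SH then obtain a where "xs = [a]" using True len1[of xs] by auto
      then show ?thesis using u by (simp add: SH r_SH)
    next
      case SG then obtain a where "xs = [a]" using True len1[of xs] by auto
      then show ?thesis using u by (simp add: SG r_SG)
    next
      case SGs then obtain a where "xs = [a]" using True len1[of xs] by auto
      then show ?thesis using u by (simp add: SGs r_SGs)
    next
      case SHs then obtain a where "xs = [a]" using True len1[of xs] by auto
      then show ?thesis using u by (simp add: SHs r_SHs)
    next
      case SMem then obtain a b where "xs = [a, b]" using True len2[of xs] by (auto simp: numeral_2_eq_2)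
      then show ?thesis using u by (simp add: SMem r_SMem)
    next
      case SHAdd then obtain a b c where "xs = [a, b, c]" using True len3[of xs] by (auto simp: numeral_3_eq_3)
      then show ?thesis using u by (simp add: SHAdd r_SHAdd)
    next
      case SGAdd then obtain a b c where "xs = [a, b, c]" using True len3[of xs] by (auto simp: numeral_3_eq_3)
      then show ?thesis using u by (simp add: SGAdd r_SGAdd)
    next
      case SEv then obtain a b c where "xs = [a, b, c]" using True len3[of xs] by (auto simp: numeral_3_eq_3)
      then show ?thesis using u by (simp add: SEv r_SEv)
    next
      case SSupp then obtain a b where "xs = [a, b]" using True len2[of xs] by (auto simp: numeral_2_eq_2)
      then show ?thesis using u by (simp add: SSupp r_SSupp)
    next
      case SPG then obtain a b where "xs = [a, b]" using True len2[of xs] by (auto simp: numeral_2_eq_2)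
      then show ?thesis using u by (simp add: SPG r_SPG)
    next
      case SActG then obtain a b c where "xs = [a, b, c]" using True len3[of xs] by (auto simp: numeral_3_eq_3)
      then show ?thesis using u by (simp add: SActG r_SActG)
    next
      case SPH then obtain a b where "xs = [a, b]" using True len2[of xs] by (auto simp: numeral_2_eq_2)
      then show ?thesis using u by (simp add: SPH r_SPH)
    next
      case SActH then obtain a b c where "xs = [a, b, c]" using True len3[of xs] by (auto simp: numeral_3_eq_3)
      then show ?thesis using u by (simp add: SActH r_SActH)
    next
      case SQ then show ?thesis using u r_SQ by simp
    qed
  qed
qed

theorem f_iso: "iso fmap M (std n I)"
  unfolding iso_def std_def using f_bij f_rel by simp

end

lemma nsub_card_n: "s \<in> nsubsets n W \<Longrightarrow> finite s \<and> card s = n \<and> s \<subseteq> W"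
  by (simp add: nsubsets_def)

lemma nsub_minus: "finite W \<Longrightarrow> card W = Suc n \<Longrightarrow> x \<in> W \<Longrightarrow> W - {x} \<in> nsubsets n W"
  by (simp add: nsubsets_def)

lemma nsub_eq_minus: "finite W \<Longrightarrow> card W = Suc n \<Longrightarrow> s \<in> nsubsets n W \<Longrightarrow> \<exists>x\<in>W. s = W - {x}"
proof -
  assume a: "finite W" "card W = Suc n" "s \<in> nsubsets n W"
  then have s: "s \<subseteq> W" "card s = n" "finite s" by (auto simp: nsubsets_def)
  then have "card (W - s) = 1" using a card_Diff_subset by fastforce
  then obtain x where x: "W - s = {x}" using card_1_singletonE by blast
  then have "s = W - {x}" using s(1) by blast
  moreover have "x \<in> W" using x by blast
  ultimately show ?thesis by blast
qed

lemma nsub_card: "finite W \<Longrightarrow> card W = Suc n \<Longrightarrow> card (nsubsets n W) = Suc n"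
proof -
  assume a: "finite W" "card W = Suc n"
  have eq: "nsubsets n W = (\<lambda>x. W - {x}) ` W"
    using nsub_eq_minus[OF a] nsub_minus[OF a] by blast
  have "inj_on (\<lambda>x. W - {x}) W" by (rule inj_onI) blast
  then show ?thesis using eq a card_image by metis
qed

lemma nsub_union: "finite W \<Longrightarrow> card W = Suc n \<Longrightarrow> s \<in> nsubsets n W \<Longrightarrow> t \<in> nsubsets n W \<Longrightarrow> s \<noteq> t \<Longrightarrow> s \<union> t = W"
proof -
  assume a: "finite W" "card W = Suc n" "s \<in> nsubsets n W" "t \<in> nsubsets n W" "s \<noteq> t"
  obtain x y where "x \<in> W" "s = W - {x}" "y \<in> W" "t = W - {y}" using nsub_eq_minus[OF a(1,2)] a(3,4) by metis
  then show ?thesis using a(5) by blast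
qed

lemma sel_ex:
  fixes F :: "'a set \<Rightarrow> 'a set"
  assumes n3: "3 \<le> n"
    and kur: "\<forall>w. w \<subseteq> A \<longrightarrow> finite w \<longrightarrow> card w = n - 1 \<longrightarrow> (\<exists>x\<in>w. x \<in> F (w - {x}))"
    and W: "W \<subseteq> A" "finite W" "card W = Suc n" and s: "s \<subseteq> W" "card s = n"
  shows "\<exists>x\<in>W. W - {x} \<noteq> s \<and> x \<in> \<Union>(F ` Pow (W - {x})) \<and> (\<not> W \<subseteq> J \<longrightarrow> \<not> W - {x} \<subseteq> J)"
proof -
  have fs: "finite s" using s(1) W(2) by (rule finite_subset)
  have "card (W - s) = 1" using card_Diff_subset[OF fs s(1)] W(3) s(2) by simp
  then obtain b where b: "W - s = {b}" using card_1_singletonE by blast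
  have sb: "s = W - {b}" using b s(1) by blast
  have bW: "b \<in> W" using b by blast
  obtain a where a: "a \<in> W" "a \<noteq> b" "\<not> W \<subseteq> J \<longrightarrow> a \<notin> J \<or> b \<notin> J"
  proof (cases "\<exists>c\<in>W. c \<notin> J \<and> c \<noteq> b")
    case True then show ?thesis using that by blast
  next
    case False
    have "card (W - {b}) = n" using W bW by simp
    then have "W - {b} \<noteq> {}" using n3 by (metis card.empty not_numeral_le_zero)
    then obtain a where "a \<in> W" "a \<noteq> b" by blast
    then show ?thesis using that False by blast
  qed
  define W0 where "W0 = W - {a, b}"
  have ab2: "card {a, b} = 2" using a(2) by simp
  have abW: "{a, b} \<subseteq> W" using a(1) bW by blast
  have cW0: "card W0 = n - 1" unfolding W0_def using card_Diff_subset[OF _ abW] ab2 W(3) by simp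
  have W0A: "W0 \<subseteq> A" "finite W0" using W(1,2) unfolding W0_def by auto
  obtain x where x: "x \<in> W0" "x \<in> F (W0 - {x})" using kur[rule_format, OF W0A(1) W0A(2) cW0] by blast
  have xW: "x \<in> W" "x \<noteq> a" "x \<noteq> b" using x(1) unfolding W0_def by auto
  have "W0 - {x} \<in> Pow (W - {x})" unfolding W0_def by auto
  then have 1: "x \<in> \<Union>(F ` Pow (W - {x}))" using x(2) by blast
  have 2: "W - {x} \<noteq> s" using sb xW bW by blast
  have 3: "\<not> W \<subseteq> J \<longrightarrow> \<not> W - {x} \<subseteq> J" using a xW bW by blast
  show ?thesis using xW 1 2 3 by blast
qed

context hsK begin
lemma relI_k: "rel M SI [a] \<longleftrightarrow> a \<in> I" by (simp add: I_def sort_iff)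
lemma relK_k: "rel M SK [a] \<longleftrightarrow> a \<in> K" by (simp add: K_def sort_iff)
lemma relH_k: "rel M SH [a] \<longleftrightarrow> a \<in> H" by (simp add: H_def sort_iff)
lemma relG_k: "rel M SG [a] \<longleftrightarrow> a \<in> G" by (simp add: G_def sort_iff)
lemma relGs_k: "rel M SGs [a] \<longleftrightarrow> a \<in> Gs" by (simp add: Gs_def sort_iff)
lemma relHs_k: "rel M SHs [a] \<longleftrightarrow> a \<in> Hs" by (simp add: Hs_def sort_iff)
lemma acth_z: "y \<in> Hs \<Longrightarrow> acth z y = y"
proof -
  assume y: "y \<in> Hs"
  obtain m where m: "m \<in> H" "acth m y = y" using regH'[OF y y] by blast
  have "acth z y = acth (hadd m m) y" using hadd_self m by simp
  also have "\<dots> = acth m (acth m y)" using acth_add m y by blast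
  also have "\<dots> = y" using m by simp
  finally show ?thesis .
qed
end


locale hsP =
  Mx: hsK n M I1 K1 H1 G1 Gs1 Hs1 \<kappa>1 z1 e1 hadd1 gadd1 ev1 actg1 acth1 pg1 ph1 +
  Nx: hsK n N I2 K2 H2 G2 Gs2 Hs2 \<kappa>2 z2 e2 hadd2 gadd2 ev2 actg2 acth2 pg2 ph2
  for n M I1 K1 H1 G1 Gs1 Hs1 \<kappa>1 z1 e1 hadd1 gadd1 ev1 actg1 acth1 pg1 ph1
    N I2 K2 H2 G2 Gs2 Hs2 \<kappa>2 z2 e2 hadd2 gadd2 ev2 actg2 acth2 pg2 ph2 +
  assumes es: "elem_sub M N"
begin

lemma univ_sub: "univ M \<subseteq> univ N" using es by (simp add: elem_sub_def)

lemma T1: "set xs \<subseteq> univ M \<Longrightarrow> rel M r xs \<longleftrightarrow> rel N r xs"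
proof -
  assume xs: "set xs \<subseteq> univ M"
  have z: "z1 \<in> univ M" using Mx.H_univ Mx.z_H by blast
  define s where "s k = (if k < length xs then xs ! k else z1)" for k
  have su: "\<forall>k. s k \<in> univ M" using xs z by (auto simp: s_def)
  have ms: "map s [0..<length xs] = xs" by (rule nth_equalityI) (auto simp: s_def)
  have "sat M (FRel r [0..<length xs]) s \<longleftrightarrow> sat N (FRel r [0..<length xs]) s"
    using es su unfolding elem_sub_def by (metis wf_fm.simps(2))
  then show ?thesis using ms by simp
qed

lemma T1_1: "x \<in> univ M \<Longrightarrow> rel M S [x] \<longleftrightarrow> rel N S [x]" using T1[of "[x]"] by simp

lemma sortI: "x \<in> univ M \<Longrightarrow> x \<in> I1 \<longleftrightarrow> x \<in> I2" using T1_1 Mx.relI_k Nx.relI_k by blast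
lemma sortK: "x \<in> univ M \<Longrightarrow> x \<in> K1 \<longleftrightarrow> x \<in> K2" using T1_1 Mx.relK_k Nx.relK_k by blast
lemma sortH: "x \<in> univ M \<Longrightarrow> x \<in> H1 \<longleftrightarrow> x \<in> H2" using T1_1 Mx.relH_k Nx.relH_k by blast
lemma sortG: "x \<in> univ M \<Longrightarrow> x \<in> G1 \<longleftrightarrow> x \<in> G2" using T1_1 Mx.relG_k Nx.relG_k by blast
lemma sortGs: "x \<in> univ M \<Longrightarrow> x \<in> Gs1 \<longleftrightarrow> x \<in> Gs2" using T1_1 Mx.relGs_k Nx.relGs_k by blast
lemma sortHs: "x \<in> univ M \<Longrightarrow> x \<in> Hs1 \<longleftrightarrow> x \<in> Hs2" using T1_1 Mx.relHs_k Nx.relHs_k by blast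

lemma I12: "I1 \<subseteq> I2" using sortI Mx.I_univ by blast
lemma K12: "K1 \<subseteq> K2" using sortK Mx.K_univ by blast
lemma H12: "H1 \<subseteq> H2" using sortH Mx.H_univ by blast
lemma G12: "G1 \<subseteq> G2" using sortG Mx.G_univ by blast
lemma Gs12: "Gs1 \<subseteq> Gs2" using sortGs Mx.Gs_univ by blast
lemma Hs12: "Hs1 \<subseteq> Hs2" using sortHs Mx.Hs_univ by blast

lemma fun2:
  assumes g1: "graph2 M S A1 B1 C1 f1" and g2: "graph2 N S A2 B2 C2 f2"
    and a: "a \<in> A1" "b \<in> B1"
  shows "f1 a b = f2 a b"
proof -
  have r: "rel M S [a, b, f1 a b]" using Mx.g2[OF g1] a by simp
  then have "set [a, b, f1 a b] \<subseteq> univ M" by (rule Mx.rel_univ)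
  then have "rel N S [a, b, f1 a b]" using r T1 by blast
  then show ?thesis using Nx.g2[OF g2] by simp
qed

lemma fun1:
  assumes g1: "graph1 M S A1 B1 f1" and g2: "graph1 N S A2 B2 f2" and a: "a \<in> A1"
  shows "f1 a = f2 a"
proof -
  have r: "rel M S [a, f1 a]" using Mx.g1[OF g1] a by simp
  then have "set [a, f1 a] \<subseteq> univ M" by (rule Mx.rel_univ)
  then have "rel N S [a, f1 a]" using r T1 by blast
  then show ?thesis using Nx.g1[OF g2] by simp
qed

lemma hadd12: "a \<in> H1 \<Longrightarrow> b \<in> H1 \<Longrightarrow> hadd1 a b = hadd2 a b" using fun2[OF Mx.haddg Nx.haddg] by blast
lemma gadd12: "a \<in> G1 \<Longrightarrow> b \<in> G1 \<Longrightarrow> gadd1 a b = gadd2 a b" using fun2[OF Mx.gaddg Nx.gaddg] by blast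
lemma ev12: "a \<in> G1 \<Longrightarrow> b \<in> K1 \<Longrightarrow> ev1 a b = ev2 a b" using fun2[OF Mx.evg Nx.evg] by blast
lemma actg12: "a \<in> G1 \<Longrightarrow> b \<in> Gs1 \<Longrightarrow> actg1 a b = actg2 a b" using fun2[OF Mx.actgg Nx.actgg] by blast
lemma acth12: "a \<in> H1 \<Longrightarrow> b \<in> Hs1 \<Longrightarrow> acth1 a b = acth2 a b" using fun2[OF Mx.acthg Nx.acthg] by blast
lemma pg12: "a \<in> Gs1 \<Longrightarrow> pg1 a = pg2 a" using fun1[OF Mx.pgg Nx.pgg] by blast
lemma ph12: "a \<in> Hs1 \<Longrightarrow> ph1 a = ph2 a" using fun1[OF Mx.phg Nx.phg] by blast

lemma z12: "z1 = z2"
proof -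
  have "z1 = hadd1 e1 e1" using Mx.hadd_self Mx.e_H by simp
  also have "\<dots> = hadd2 e1 e1" using hadd12 Mx.e_H by blast
  also have "\<dots> = z2" using Nx.hadd_self H12 Mx.e_H by blast
  finally show ?thesis .
qed

lemma e12: "e1 = e2"
proof -
  have "e1 \<in> H2" using H12 Mx.e_H by blast
  then show ?thesis using Nx.Hze Mx.zne z12 by blast
qed

lemma H_same: "H1 = H2" using Mx.Hze Nx.Hze z12 e12 by simp

lemma kappa12: "u \<in> K1 \<Longrightarrow> \<kappa>1 u = \<kappa>2 u"
proof -
  assume u: "u \<in> K1"
  have u2: "u \<in> K2" using u K12 by blast
  have sub: "\<kappa>1 u \<subseteq> \<kappa>2 u"
  proof
    fix i assume "i \<in> \<kappa>1 u"
    then have i: "i \<in> I1" "rel M SMem [i, u]" using Mx.k_mem by auto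
    then have "set [i, u] \<subseteq> univ M" by (intro Mx.rel_univ)
    then have "rel N SMem [i, u]" using i T1 by blast
    then show "i \<in> \<kappa>2 u" using Nx.k_mem Nx.memrel by blast
  qed
  have c1: "finite (\<kappa>1 u)" "card (\<kappa>1 u) = n" using Mx.k_nsub[OF u] by (auto simp: nsubsets_def)
  have c2: "finite (\<kappa>2 u)" "card (\<kappa>2 u) = n" using Nx.k_nsub[OF u2] by (auto simp: nsubsets_def)
  show ?thesis using card_subset_eq[OF c2(1) sub] c1 c2 by simp
qed

lemma K1_char: "u \<in> K1 \<longleftrightarrow> u \<in> K2 \<and> \<kappa>2 u \<subseteq> I1"
proof
  assume u: "u \<in> K1"
  then show "u \<in> K2 \<and> \<kappa>2 u \<subseteq> I1" using K12 kappa12 Mx.k_nsub by (auto simp: nsubsets_def)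
next
  assume u: "u \<in> K2 \<and> \<kappa>2 u \<subseteq> I1"
  then have "\<kappa>2 u \<in> nsubsets n I1" using Nx.k_nsub by (auto simp: nsubsets_def)
  then obtain u' where u': "u' \<in> K1" "\<kappa>1 u' = \<kappa>2 u" using Mx.k_surj by blast
  then have "\<kappa>2 u' = \<kappa>2 u" using kappa12 by simp
  then have "u' = u" using Nx.kinj u u' K12 by blast
  then show "u \<in> K1" using u' by simp
qed

end

context hsP begin

lemma supp12: "\<gamma> \<in> G1 \<Longrightarrow> u \<in> K2 \<Longrightarrow> ev2 \<gamma> u = e2 \<Longrightarrow> u \<in> K1"
proof (rule ccontr)
  assume g: "\<gamma> \<in> G1" and u: "u \<in> K2" "ev2 \<gamma> u = e2" and nu: "u \<notin> K1"
  define S where "S = {u\<in>K1. ev1 \<gamma> u = e1}"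
  have "finite S" unfolding S_def using Mx.G_fin[OF g] .
  then obtain cs where cs: "set cs = S" using finite_list by blast
  define F :: "nat \<Rightarrow> hs_sym fm" where
    "F k = (if k = 0 then FRel SSupp [1, 0] else if k \<le> length cs then FNeg (FEq 0 (k + 1)) else FEq 0 0)" for k
  define \<phi> where "\<phi> = FEx 0 (FConj F)"
  define s where "s k = (if k = 1 then \<gamma> else if 2 \<le> k \<and> k - 2 < length cs then cs ! (k - 2) else z1)" for k
  have gu: "\<gamma> \<in> univ M" using g Mx.G_univ by blast
  have csu: "set cs \<subseteq> univ M" using cs Mx.K_univ unfolding S_def by blast
  have zu: "z1 \<in> univ M" using Mx.H_univ Mx.z_H by blast
  have su: "\<forall>k. s k \<in> univ M"
  proof
    fix k show "s k \<in> univ M" unfolding s_def using gu csu zu nth_mem by auto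
  qed
  have fvF: "fv (F k) \<subseteq> {..Suc (length cs)}" for k unfolding F_def by auto
  have "(\<Union>k. fv (F k)) \<subseteq> {..Suc (length cs)}" using fvF by blast
  then have "finite (\<Union>k. fv (F k))" using finite_subset by blast
  moreover have "wf_fm (F k)" for k unfolding F_def by simp
  ultimately have wf: "wf_fm \<phi>" unfolding \<phi>_def by simp
  have satN: "sat N \<phi> s"
  proof -
    have uN: "u \<in> univ N" using u Nx.K_univ by blast
    have "sat N (F k) (s(0 := u))" for k
    proof (cases "k = 0")
      case True
      have "rel N SSupp [\<gamma>, u]" using Nx.supp g G12 u by blast
      then show ?thesis using True by (simp add: F_def s_def)
    next
      case False
      show ?thesis
      proof (cases "k \<le> length cs")
        case True
        have kl: "k - 1 < length cs" using True False by simp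
        then have "cs ! (k - 1) \<in> set cs" by (rule nth_mem)
        then have "cs ! (k - 1) \<in> K1" using cs unfolding S_def by blast
        then have "u \<noteq> cs ! (k - 1)" using nu by blast
        moreover have "s (k + 1) = cs ! (k - 1)"
        proof -
          have "k + 1 \<noteq> 1" "2 \<le> k + 1" "k + 1 - 2 = k - 1" using False by auto
          then show ?thesis using kl unfolding s_def by simp
        qed
        ultimately show ?thesis using True False by (simp add: F_def)
      next
        case False2: False
        then show ?thesis using False by (simp add: F_def)
      qed
    qed
    then show ?thesis unfolding \<phi>_def using uN by auto
  qed
  then have satM: "sat M \<phi> s" using es wf su unfolding elem_sub_def by blast
  then obtain a where a: "a \<in> univ M" "\<forall>k. sat M (F k) (s(0 := a))" unfolding \<phi>_def by auto
  have "sat M (F 0) (s(0 := a))" using a by blast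
  then have "rel M SSupp [\<gamma>, a]" by (simp add: F_def s_def)
  then have "a \<in> S" using Mx.supp unfolding S_def by blast
  then obtain j where j: "j < length cs" "cs ! j = a" using cs by (metis in_set_conv_nth)
  have "sat M (F (Suc j)) (s(0 := a))" using a by blast
  moreover have "s (Suc j + 1) = cs ! j" using j by (simp add: s_def)
  ultimately show False using j by (simp add: F_def)
qed

lemma supp_eq: "\<gamma> \<in> G1 \<Longrightarrow> {u\<in>K2. ev2 \<gamma> u = e2} = {u\<in>K1. ev1 \<gamma> u = e1}"
  using supp12 K12 ev12 e12 by auto

lemma ev_out: "\<gamma> \<in> G1 \<Longrightarrow> u \<in> K2 \<Longrightarrow> u \<notin> K1 \<Longrightarrow> ev2 \<gamma> u = z2"
  using supp12[of \<gamma> u] Nx.ev_ze[of \<gamma> u] G12 by blast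

end

locale hsQ = hsP +
  fixes F :: "'a set \<Rightarrow> 'a set"
  assumes Ffin: "\<forall>s. finite (F s)"
    and Fk: "\<forall>w. w \<subseteq> univ N \<longrightarrow> finite w \<longrightarrow> card w = n - 1 \<longrightarrow> (\<exists>x\<in>w. x \<in> F (w - {x}))"
    and n3: "3 \<le> n"
begin

definition sel where "sel W s = (SOME x. x \<in> W \<and> W - {x} \<noteq> s \<and> x \<in> \<Union>(F ` Pow (W - {x})) \<and> (\<not> W \<subseteq> I1 \<longrightarrow> \<not> W - {x} \<subseteq> I1))"

lemma sel_spec: "W \<subseteq> I2 \<Longrightarrow> finite W \<Longrightarrow> card W = Suc n \<Longrightarrow> s \<subseteq> W \<Longrightarrow> card s = n \<Longrightarrow>
  sel W s \<in> W \<and> W - {sel W s} \<noteq> s \<and> sel W s \<in> \<Union>(F ` Pow (W - {sel W s})) \<and> (\<not> W \<subseteq> I1 \<longrightarrow> \<not> W - {sel W s} \<subseteq> I1)"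
proof -
  assume a: "W \<subseteq> I2" "finite W" "card W = Suc n" "s \<subseteq> W" "card s = n"
  have "W \<subseteq> univ N" using a(1) Nx.I_univ by blast
  then have "\<exists>x\<in>W. W - {x} \<noteq> s \<and> x \<in> \<Union>(F ` Pow (W - {x})) \<and> (\<not> W \<subseteq> I1 \<longrightarrow> \<not> W - {x} \<subseteq> I1)"
    using sel_ex[OF n3 Fk _ a(2) a(3) a(4) a(5)] by blast
  then have "\<exists>x. x \<in> W \<and> W - {x} \<noteq> s \<and> x \<in> \<Union>(F ` Pow (W - {x})) \<and> (\<not> W \<subseteq> I1 \<longrightarrow> \<not> W - {x} \<subseteq> I1)" by blast
  then show ?thesis unfolding sel_def by (rule someI_ex)
qed

definition bx0 where "bx0 u = (if u \<in> K1 then SOME x. x \<in> Gs1 \<and> pg1 x = u else SOME x. x \<in> Gs2 \<and> pg2 x = u)"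
definition by0 where "by0 u = (if u \<in> K1 then SOME x. x \<in> Hs1 \<and> ph1 x = u else SOME x. x \<in> Hs2 \<and> ph2 x = u)"

lemma bx0_M: "u \<in> K1 \<Longrightarrow> bx0 u \<in> Gs1 \<and> pg1 (bx0 u) = u"
proof -
  assume u: "u \<in> K1"
  then have "\<exists>x. x \<in> Gs1 \<and> pg1 x = u" using Mx.stalkG by blast
  then have "(SOME x. x \<in> Gs1 \<and> pg1 x = u) \<in> Gs1 \<and> pg1 (SOME x. x \<in> Gs1 \<and> pg1 x = u) = u" by (rule someI_ex)
  then show ?thesis using u unfolding bx0_def by simp
qed
lemma bx0_N: "u \<in> K2 \<Longrightarrow> bx0 u \<in> Gs2 \<and> pg2 (bx0 u) = u"
proof (cases "u \<in> K1")
  case True then show ?thesis using bx0_M Gs12 pg12 by force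
next
  case False
  assume u: "u \<in> K2"
  then have "\<exists>x. x \<in> Gs2 \<and> pg2 x = u" using Nx.stalkG by blast
  then have "(SOME x. x \<in> Gs2 \<and> pg2 x = u) \<in> Gs2 \<and> pg2 (SOME x. x \<in> Gs2 \<and> pg2 x = u) = u" by (rule someI_ex)
  then show ?thesis using False unfolding bx0_def by simp
qed
lemma by0_M: "u \<in> K1 \<Longrightarrow> by0 u \<in> Hs1 \<and> ph1 (by0 u) = u"
proof -
  assume u: "u \<in> K1"
  then have "\<exists>x. x \<in> Hs1 \<and> ph1 x = u" using Mx.stalkH by blast
  then have "(SOME x. x \<in> Hs1 \<and> ph1 x = u) \<in> Hs1 \<and> ph1 (SOME x. x \<in> Hs1 \<and> ph1 x = u) = u" by (rule someI_ex)
  then show ?thesis using u unfolding by0_def by simp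
qed
lemma by0_N: "u \<in> K2 \<Longrightarrow> by0 u \<in> Hs2 \<and> ph2 (by0 u) = u"
proof (cases "u \<in> K1")
  case True then show ?thesis using by0_M Hs12 ph12 by force
next
  case False
  assume u: "u \<in> K2"
  then have "\<exists>x. x \<in> Hs2 \<and> ph2 x = u" using Nx.stalkH by blast
  then have "(SOME x. x \<in> Hs2 \<and> ph2 x = u) \<in> Hs2 \<and> ph2 (SOME x. x \<in> Hs2 \<and> ph2 x = u) = u" by (rule someI_ex)
  then show ?thesis using False unfolding by0_def by simp
qed

lemma fin_K_sub: "finite B \<Longrightarrow> finite {v\<in>K2. \<kappa>2 v \<subseteq> B}"
proof -
  assume B: "finite B"
  have "\<kappa>2 ` {v\<in>K2. \<kappa>2 v \<subseteq> B} \<subseteq> Pow B" by auto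
  then have "finite (\<kappa>2 ` {v\<in>K2. \<kappa>2 v \<subseteq> B})" using B finite_subset by blast
  moreover have "inj_on \<kappa>2 {v\<in>K2. \<kappa>2 v \<subseteq> B}" using Nx.kinj by (auto intro: inj_onI)
  ultimately show ?thesis using finite_imageD by blast
qed

definition canon where "canon W v = (SOME us. distinct us \<and> set us = {u\<in>K2. \<kappa>2 u \<subseteq> W \<and> u \<noteq> v})"

lemma canon_spec: "finite W \<Longrightarrow> distinct (canon W v) \<and> set (canon W v) = {u\<in>K2. \<kappa>2 u \<subseteq> W \<and> u \<noteq> v}"
proof -
  assume W: "finite W"
  have "finite {u\<in>K2. \<kappa>2 u \<subseteq> W \<and> u \<noteq> v}" using fin_K_sub[OF W] by (rule rev_finite_subset) blast
  then have "\<exists>us. distinct us \<and> set us = {u\<in>K2. \<kappa>2 u \<subseteq> W \<and> u \<noteq> v}" using finite_distinct_list by blast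
  then show ?thesis unfolding canon_def by (rule someI_ex)
qed

definition Q0 where "Q0 v W = rel N SQ (map bx0 (canon W v) @ [by0 v])"

definition T where "T u = {v\<in>K2. card (\<kappa>2 u \<union> \<kappa>2 v) = Suc n \<and>
   \<kappa>2 u = (\<kappa>2 u \<union> \<kappa>2 v) - {sel (\<kappa>2 u \<union> \<kappa>2 v) (\<kappa>2 v)} \<and> \<not> Q0 v (\<kappa>2 u \<union> \<kappa>2 v)}"

lemma T_sel: "u \<in> K2 \<Longrightarrow> v \<in> T u \<Longrightarrow>
   sel (\<kappa>2 u \<union> \<kappa>2 v) (\<kappa>2 v) \<in> \<kappa>2 u \<union> \<kappa>2 v \<and>
   sel (\<kappa>2 u \<union> \<kappa>2 v) (\<kappa>2 v) \<in> \<Union>(F ` Pow (\<kappa>2 u)) \<and>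
   (\<not> \<kappa>2 u \<union> \<kappa>2 v \<subseteq> I1 \<longrightarrow> \<not> \<kappa>2 u \<subseteq> I1)"
proof -
  assume u: "u \<in> K2" and v: "v \<in> T u"
  define W where "W = \<kappa>2 u \<union> \<kappa>2 v"
  have vK: "v \<in> K2" and cW: "card W = Suc n" and ku: "\<kappa>2 u = W - {sel W (\<kappa>2 v)}"
    using v unfolding T_def W_def by auto
  have ku2: "\<kappa>2 u \<in> nsubsets n I2" "\<kappa>2 v \<in> nsubsets n I2" using Nx.k_nsub u vK by auto
  have WI: "W \<subseteq> I2" "finite W" using ku2 unfolding W_def nsubsets_def by auto
  have "\<kappa>2 v \<subseteq> W" "card (\<kappa>2 v) = n" using ku2 unfolding W_def nsubsets_def by auto
  then have s: "sel W (\<kappa>2 v) \<in> W \<and> W - {sel W (\<kappa>2 v)} \<noteq> \<kappa>2 v \<and> sel W (\<kappa>2 v) \<in> \<Union>(F ` Pow (W - {sel W (\<kappa>2 v)}))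
     \<and> (\<not> W \<subseteq> I1 \<longrightarrow> \<not> W - {sel W (\<kappa>2 v)} \<subseteq> I1)"
    using sel_spec[OF WI cW] by blast
  then show ?thesis using ku unfolding W_def[symmetric] by simp
qed

lemma T_fin: "u \<in> K2 \<Longrightarrow> finite (T u)"
proof -
  assume u: "u \<in> K2"
  define B where "B = \<kappa>2 u \<union> \<Union>(F ` Pow (\<kappa>2 u))"
  have fu: "finite (\<kappa>2 u)" using Nx.k_nsub u by (simp add: nsubsets_def)
  have "finite B" unfolding B_def using fu Ffin by simp
  moreover have "T u \<subseteq> {v\<in>K2. \<kappa>2 v \<subseteq> B}"
  proof
    fix v assume v: "v \<in> T u"
    have vK: "v \<in> K2" using v unfolding T_def by auto
    have ku: "\<kappa>2 u = (\<kappa>2 u \<union> \<kappa>2 v) - {sel (\<kappa>2 u \<union> \<kappa>2 v) (\<kappa>2 v)}" using v unfolding T_def by auto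
    have s: "sel (\<kappa>2 u \<union> \<kappa>2 v) (\<kappa>2 v) \<in> \<Union>(F ` Pow (\<kappa>2 u))" using T_sel[OF u v] by blast
    have "\<kappa>2 v \<subseteq> \<kappa>2 u \<union> {sel (\<kappa>2 u \<union> \<kappa>2 v) (\<kappa>2 v)}" using ku by blast
    then have "\<kappa>2 v \<subseteq> B" unfolding B_def using s by blast
    then show "v \<in> {v\<in>K2. \<kappa>2 v \<subseteq> B}" using vK by blast
  qed
  ultimately show ?thesis using fin_K_sub finite_subset by blast
qed

lemma T_K2: "T u \<subseteq> K2" unfolding T_def by blast

lemma T_K1: "u \<in> K1 \<Longrightarrow> T u \<subseteq> K1"
proof
  fix v assume u: "u \<in> K1" and v: "v \<in> T u"
  have u2: "u \<in> K2" using u K12 by blast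
  have vK: "v \<in> K2" using v unfolding T_def by auto
  have "\<kappa>2 u \<subseteq> I1" using K1_char u by blast
  then have "\<kappa>2 u \<union> \<kappa>2 v \<subseteq> I1" using T_sel[OF u2 v] by blast
  then show "v \<in> K1" using K1_char vK by blast
qed

end

context hsQ begin

definition Gam where "Gam u = (if u \<in> K1 then SOME \<gamma>. \<gamma> \<in> G1 \<and> (\<forall>v\<in>K1. ev1 \<gamma> v = (if v \<in> T u then e1 else z1))
   else SOME \<gamma>. \<gamma> \<in> G2 \<and> (\<forall>v\<in>K2. ev2 \<gamma> v = (if v \<in> T u then e2 else z2)))"

lemma Gam_M: "u \<in> K1 \<Longrightarrow> Gam u \<in> G1 \<and> (\<forall>v\<in>K1. ev1 (Gam u) v = (if v \<in> T u then e1 else z1))"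
proof -
  assume u: "u \<in> K1"
  have "finite (T u)" using T_fin u K12 by blast
  then have "\<exists>\<gamma>. \<gamma> \<in> G1 \<and> (\<forall>v\<in>K1. ev1 \<gamma> v = (if v \<in> T u then e1 else z1))"
    using Mx.G_ex T_K1[OF u] by blast
  then have "(SOME \<gamma>. \<gamma> \<in> G1 \<and> (\<forall>v\<in>K1. ev1 \<gamma> v = (if v \<in> T u then e1 else z1))) \<in> G1 \<and>
     (\<forall>v\<in>K1. ev1 (SOME \<gamma>. \<gamma> \<in> G1 \<and> (\<forall>v\<in>K1. ev1 \<gamma> v = (if v \<in> T u then e1 else z1))) v = (if v \<in> T u then e1 else z1))"
    by (rule someI_ex)
  then show ?thesis using u unfolding Gam_def by simp
qed

lemma Gam_N: "u \<in> K2 \<Longrightarrow> Gam u \<in> G2 \<and> (\<forall>v\<in>K2. ev2 (Gam u) v = (if v \<in> T u then e2 else z2))"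
proof (cases "u \<in> K1")
  case True
  have g: "Gam u \<in> G1" "\<forall>v\<in>K1. ev1 (Gam u) v = (if v \<in> T u then e1 else z1)" using Gam_M[OF True] by auto
  have "ev2 (Gam u) v = (if v \<in> T u then e2 else z2)" if v: "v \<in> K2" for v
  proof (cases "v \<in> K1")
    case True
    then show ?thesis using g ev12 e12 z12 by simp
  next
    case False
    then have "v \<notin> T u" using T_K1[OF \<open>u \<in> K1\<close>] by blast
    then show ?thesis using ev_out[OF g(1) v False] by simp
  qed
  then show ?thesis using g(1) G12 by blast
next
  case False
  assume u: "u \<in> K2"
  have "finite (T u)" using T_fin u by blast
  then have "\<exists>\<gamma>. \<gamma> \<in> G2 \<and> (\<forall>v\<in>K2. ev2 \<gamma> v = (if v \<in> T u then e2 else z2))"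
    using Nx.G_ex T_K2 by blast
  then have "(SOME \<gamma>. \<gamma> \<in> G2 \<and> (\<forall>v\<in>K2. ev2 \<gamma> v = (if v \<in> T u then e2 else z2))) \<in> G2 \<and>
     (\<forall>v\<in>K2. ev2 (SOME \<gamma>. \<gamma> \<in> G2 \<and> (\<forall>v\<in>K2. ev2 \<gamma> v = (if v \<in> T u then e2 else z2))) v = (if v \<in> T u then e2 else z2))"
    by (rule someI_ex)
  then show ?thesis using False unfolding Gam_def by simp
qed

definition bx where "bx u = actg2 (Gam u) (bx0 u)"

lemma bx_N: "u \<in> K2 \<Longrightarrow> bx u \<in> Gs2 \<and> pg2 (bx u) = u"
proof -
  assume u: "u \<in> K2"
  have "Gam u \<in> G2" "bx0 u \<in> Gs2" "pg2 (bx0 u) = u" using Gam_N[OF u] bx0_N[OF u] by auto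
  then show ?thesis unfolding bx_def using Nx.actg_Gs Nx.pg_act by auto
qed

lemma bx_M: "u \<in> K1 \<Longrightarrow> bx u \<in> Gs1 \<and> pg1 (bx u) = u"
proof -
  assume u: "u \<in> K1"
  have a: "Gam u \<in> G1" "bx0 u \<in> Gs1" "pg1 (bx0 u) = u" using Gam_M[OF u] bx0_M[OF u] by auto
  then have "bx u = actg1 (Gam u) (bx0 u)" unfolding bx_def using actg12 by simp
  then show ?thesis using a Mx.actg_Gs Mx.pg_act by auto
qed

end

context hsQ begin

lemma QbN:
  assumes us: "length us = n" "set us \<subseteq> K2" and v: "v \<in> K2"
    and c: "compat_idx n I2 (map \<kappa>2 us) (\<kappa>2 v)"
  shows "rel N SQ (map bx us @ [by0 v])"
proof -
  obtain W where W: "W \<subseteq> I2" "finite W" "card W = Suc n" "set (map \<kappa>2 us) \<union> {\<kappa>2 v} = nsubsets n W"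
    using c unfolding compat_idx_def by auto
  have ns: "card (nsubsets n W) = Suc n" by (rule nsub_card[OF W(2,3)])
  have vin: "\<kappa>2 v \<in> nsubsets n W" using W(4) by blast
  have cl: "card (set (map \<kappa>2 us)) \<le> n" using card_length[of "map \<kappa>2 us"] us(1) by simp
  have kvn: "\<kappa>2 v \<notin> set (map \<kappa>2 us)"
  proof
    assume "\<kappa>2 v \<in> set (map \<kappa>2 us)"
    then have "set (map \<kappa>2 us) = nsubsets n W" using W(4) by blast
    then show False using cl ns by simp
  qed
  have "card (nsubsets n W) = Suc (card (set (map \<kappa>2 us)))"
    using W(4)[symmetric] kvn by (simp add: card_insert_if)
  then have cs: "card (set (map \<kappa>2 us)) = length (map \<kappa>2 us)" using ns us(1) by simp
  then have dk: "distinct (map \<kappa>2 us)" by (rule card_distinct)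
  then have dus: "distinct us" by (simp add: distinct_map)
  have inj2: "\<And>a b. a \<in> K2 \<Longrightarrow> b \<in> K2 \<Longrightarrow> \<kappa>2 a = \<kappa>2 b \<Longrightarrow> a = b" using Nx.kinj by blast
  have set_us: "set us = {u\<in>K2. \<kappa>2 u \<subseteq> W \<and> u \<noteq> v}"
  proof
    show "set us \<subseteq> {u\<in>K2. \<kappa>2 u \<subseteq> W \<and> u \<noteq> v}"
    proof
      fix u assume u: "u \<in> set us"
      then have "\<kappa>2 u \<in> nsubsets n W" using W(4) by auto
      moreover have "u \<noteq> v" using u kvn by auto
      ultimately show "u \<in> {u\<in>K2. \<kappa>2 u \<subseteq> W \<and> u \<noteq> v}" using u us(2) by (auto simp: nsubsets_def)
    qed
    show "{u\<in>K2. \<kappa>2 u \<subseteq> W \<and> u \<noteq> v} \<subseteq> set us"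
    proof
      fix u assume u: "u \<in> {u\<in>K2. \<kappa>2 u \<subseteq> W \<and> u \<noteq> v}"
      then have "\<kappa>2 u \<in> nsubsets n W" using Nx.k_nsub by (auto simp: nsubsets_def)
      moreover have "\<kappa>2 u \<noteq> \<kappa>2 v" using u v inj2 by blast
      ultimately have "\<kappa>2 u \<in> set (map \<kappa>2 us)" using W(4) by blast
      then obtain u' where "u' \<in> set us" "\<kappa>2 u' = \<kappa>2 u" by auto
      then show "u \<in> set us" using u us(2) inj2 by blast
    qed
  qed
  have can: "distinct (canon W v)" "set (canon W v) = set us" using canon_spec[OF W(2), of v] set_us by auto
  have mset_eq: "mset (map bx0 (canon W v)) = mset (map bx0 us)"
    using can dus set_eq_iff_mset_eq_distinct by (metis mset_map)
  have Q0eq: "Q0 v W \<longleftrightarrow> rel N SQ (map bx0 us @ [by0 v])"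
    unfolding Q0_def using Nx.Qsym mset_eq us(1) by (metis length_map)
  have bx0s: "set (map bx0 us) \<subseteq> Gs2" using bx0_N us(2) by auto
  have cb: "map (\<kappa>2 \<circ> pg2) (map bx0 us) = map \<kappa>2 us"
  proof -
    have "map (\<kappa>2 \<circ> pg2) (map bx0 us) = map (\<lambda>u. \<kappa>2 (pg2 (bx0 u))) us" by simp
    also have "\<dots> = map \<kappa>2 us" using us(2) bx0_N by (intro map_cong) auto
    finally show ?thesis .
  qed
  have by0v: "by0 v \<in> Hs2" "ph2 (by0 v) = v" using by0_N v by auto
  have gs: "set (map Gam us) \<subseteq> G2" using Gam_N us(2) by auto
  have pre: "length (map bx0 us) = n \<and> length (map Gam us) = n \<and> set (map bx0 us) \<subseteq> Gs2 \<and> by0 v \<in> Hs2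
     \<and> set (map Gam us) \<subseteq> G2 \<and> z2 \<in> H2 \<and> compat_idx n I2 (map (\<kappa>2 \<circ> pg2) (map bx0 us)) (\<kappa>2 (ph2 (by0 v)))"
    using us(1) bx0s by0v gs Nx.z_H c unfolding cb by simp
  have eqv: "(rel N SQ (map2 actg2 (map Gam us) (map bx0 us) @ [acth2 z2 (by0 v)]) \<longleftrightarrow> rel N SQ (map bx0 us @ [by0 v]))
      \<longleftrightarrow> foldr hadd2 (map (\<lambda>\<gamma>. ev2 \<gamma> (ph2 (by0 v))) (map Gam us) @ [z2]) z2 = z2"
    using mp[OF spec[OF spec[OF spec[OF spec[OF Nx.Qequi, of "map bx0 us"], of "by0 v"], of "map Gam us"], of z2] pre] .
  have m2: "map2 actg2 (map Gam us) (map bx0 us) = map bx us"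
    by (rule nth_equalityI) (simp_all add: bx_def)
  have az: "acth2 z2 (by0 v) = by0 v" using Nx.acth_z by0v by blast
  have LH: "set (map (\<lambda>\<gamma>. ev2 \<gamma> v) (map Gam us) @ [z2]) \<subseteq> H2" using gs Nx.ev_H v Nx.z_H by auto
  have eqv2: "(rel N SQ (map bx us @ [by0 v]) \<longleftrightarrow> Q0 v W)
      \<longleftrightarrow> even (length (filter (\<lambda>a. a = e2) (map (\<lambda>\<gamma>. ev2 \<gamma> v) (map Gam us) @ [z2])))"
    using eqv m2 az by0v Q0eq Nx.parity[OF LH] by simp
  have cnt1: "length (filter (\<lambda>a. a = e2) (map (\<lambda>\<gamma>. ev2 \<gamma> v) (map Gam us) @ [z2]))
     = length (filter (\<lambda>u. v \<in> T u) us)"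
  proof -
    have "filter (\<lambda>a. a = e2) (map (\<lambda>\<gamma>. ev2 \<gamma> v) (map Gam us) @ [z2]) = filter (\<lambda>a. a = e2) (map (\<lambda>u. ev2 (Gam u) v) us)"
      using Nx.zne by (simp add: o_def)
    also have "\<dots> = map (\<lambda>u. ev2 (Gam u) v) (filter (\<lambda>u. ev2 (Gam u) v = e2) us)" by (simp add: filter_map o_def)
    also have "filter (\<lambda>u. ev2 (Gam u) v = e2) us = filter (\<lambda>u. v \<in> T u) us"
    proof (rule filter_cong)
      fix u assume "u \<in> set us"
      then have "ev2 (Gam u) v = (if v \<in> T u then e2 else z2)" using Gam_N us(2) v by blast
      then show "(ev2 (Gam u) v = e2) = (v \<in> T u)" using Nx.zne by simp
    qed simp
    finally show ?thesis by (metis length_map)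
  qed
  define x0 where "x0 = sel W (\<kappa>2 v)"
  have kvW: "\<kappa>2 v \<subseteq> W" "card (\<kappa>2 v) = n" using vin by (auto simp: nsubsets_def)
  have x0: "x0 \<in> W" "W - {x0} \<noteq> \<kappa>2 v" using sel_spec[OF W(1,2,3) kvW] unfolding x0_def by auto
  have "W - {x0} \<in> nsubsets n W" using nsub_minus[OF W(2,3) x0(1)] .
  then have "W - {x0} \<in> set (map \<kappa>2 us)" using W(4) x0(2) by blast
  then obtain u0 where u0: "u0 \<in> set us" "\<kappa>2 u0 = W - {x0}" by auto
  have Tiff: "v \<in> T u \<longleftrightarrow> u = u0 \<and> \<not> Q0 v W" if u: "u \<in> set us" for u
  proof -
    have uK: "u \<in> K2" using u us(2) by blast
    have kun: "\<kappa>2 u \<in> nsubsets n W" using u W(4) by auto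
    have "\<kappa>2 u \<noteq> \<kappa>2 v" using u kvn by auto
    then have un: "\<kappa>2 u \<union> \<kappa>2 v = W" using nsub_union[OF W(2,3) kun vin] by blast
    have "v \<in> T u \<longleftrightarrow> card (\<kappa>2 u \<union> \<kappa>2 v) = Suc n \<and>
         \<kappa>2 u = (\<kappa>2 u \<union> \<kappa>2 v) - {sel (\<kappa>2 u \<union> \<kappa>2 v) (\<kappa>2 v)} \<and> \<not> Q0 v (\<kappa>2 u \<union> \<kappa>2 v)"
      using v by (simp add: T_def)
    also have "\<dots> \<longleftrightarrow> \<kappa>2 u = W - {x0} \<and> \<not> Q0 v W" unfolding un x0_def using W(3) by simp
    also have "\<kappa>2 u = W - {x0} \<longleftrightarrow> u = u0"
    proof
      assume "\<kappa>2 u = W - {x0}"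
      then have "\<kappa>2 u = \<kappa>2 u0" using u0(2) by simp
      moreover have "u0 \<in> K2" using u0(1) us(2) by blast
      ultimately show "u = u0" using inj2[OF uK] by blast
    next
      assume "u = u0" then show "\<kappa>2 u = W - {x0}" using u0(2) by simp
    qed
    finally show ?thesis .
  qed
  have cnt2: "length (filter (\<lambda>u. v \<in> T u) us) = (if Q0 v W then 0 else 1)"
  proof -
    have "filter (\<lambda>u. v \<in> T u) us = filter (\<lambda>u. u = u0 \<and> \<not> Q0 v W) us"
      using Tiff by (intro filter_cong) auto
    moreover have "length (filter (\<lambda>u. u = u0 \<and> \<not> Q0 v W) us) = (if Q0 v W then 0 else 1)"
    proof (cases "Q0 v W")
      case True then show ?thesis by simp
    next
      case False
      have d: "distinct (filter (\<lambda>u. u = u0) us)" using dus by simp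
      have "set (filter (\<lambda>u. u = u0) us) = {u0}" using u0(1) by auto
      then have "length (filter (\<lambda>u. u = u0) us) = 1" using distinct_card[OF d] by simp
      then show ?thesis using False by simp
    qed
    ultimately show ?thesis by simp
  qed
  have ev: "even (length (filter (\<lambda>a. a = e2) (map (\<lambda>\<gamma>. ev2 \<gamma> v) (map Gam us) @ [z2]))) \<longleftrightarrow> Q0 v W"
    unfolding cnt1 cnt2 by simp
  show ?thesis using eqv2 unfolding ev by blast
qed

lemma QbM:
  assumes us: "length us = n" "set us \<subseteq> K1" and v: "v \<in> K1"
    and c: "compat_idx n I1 (map \<kappa>1 us) (\<kappa>1 v)"
  shows "rel M SQ (map bx us @ [by0 v])"
proof -
  have k: "map \<kappa>1 us = map \<kappa>2 us" using us(2) kappa12 by (intro map_cong) auto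
  have kv: "\<kappa>1 v = \<kappa>2 v" using kappa12 v by blast
  have c2: "compat_idx n I2 (map \<kappa>2 us) (\<kappa>2 v)" using c I12 unfolding k kv compat_idx_def by blast
  have "rel N SQ (map bx us @ [by0 v])" using QbN[OF us(1) _ _ c2] us(2) v K12 by blast
  moreover have "set (map bx us @ [by0 v]) \<subseteq> univ M" using bx_M by0_M us(2) v Mx.Gs_univ Mx.Hs_univ by auto
  ultimately show ?thesis using T1 by blast
qed

end

context hsQ begin

lemma hsB_N: "hsB n N I2 K2 H2 G2 Gs2 Hs2 \<kappa>2 z2 e2 hadd2 gadd2 ev2 actg2 acth2 pg2 ph2 bx by0"
proof (rule hsB.intro)
  show "hsK n N I2 K2 H2 G2 Gs2 Hs2 \<kappa>2 z2 e2 hadd2 gadd2 ev2 actg2 acth2 pg2 ph2" by (rule Nx.hsK_axioms)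
  show "hsB_axioms n N I2 K2 Gs2 Hs2 \<kappa>2 pg2 ph2 bx by0"
    by (rule hsB_axioms.intro) (use bx_N by0_N QbN in auto)
qed

lemma hsB_M: "hsB n M I1 K1 H1 G1 Gs1 Hs1 \<kappa>1 z1 e1 hadd1 gadd1 ev1 actg1 acth1 pg1 ph1 bx by0"
proof (rule hsB.intro)
  show "hsK n M I1 K1 H1 G1 Gs1 Hs1 \<kappa>1 z1 e1 hadd1 gadd1 ev1 actg1 acth1 pg1 ph1" by (rule Mx.hsK_axioms)
  show "hsB_axioms n M I1 K1 Gs1 Hs1 \<kappa>1 pg1 ph1 bx by0"
    by (rule hsB_axioms.intro) (use bx_M by0_M QbM in auto)
qed

end

sublocale hsQ \<subseteq> NB: hsB n N I2 K2 H2 G2 Gs2 Hs2 \<kappa>2 z2 e2 hadd2 gadd2 ev2 actg2 acth2 pg2 ph2 bx by0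
  by (rule hsB_N)
sublocale hsQ \<subseteq> MB: hsB n M I1 K1 H1 G1 Gs1 Hs1 \<kappa>1 z1 e1 hadd1 gadd1 ev1 actg1 acth1 pg1 ph1 bx by0
  by (rule hsB_M)

context hsQ begin

lemma spt12: "\<gamma> \<in> G1 \<Longrightarrow> MB.spt \<gamma> = NB.spt \<gamma>"
proof -
  assume g: "\<gamma> \<in> G1"
  have "NB.spt \<gamma> = \<kappa>2 ` {u\<in>K2. ev2 \<gamma> u = e2}" by (simp add: NB.spt_def)
  also have "\<dots> = \<kappa>2 ` {u\<in>K1. ev1 \<gamma> u = e1}" using supp_eq[OF g] by simp
  also have "\<dots> = \<kappa>1 ` {u\<in>K1. ev1 \<gamma> u = e1}" using kappa12 by (intro image_cong) auto
  finally show ?thesis by (simp add: MB.spt_def)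
qed

lemma f12: "x \<in> univ M \<Longrightarrow> MB.fmap x = NB.fmap x"
proof -
  assume xu: "x \<in> univ M"
  show ?thesis
  proof (cases rule: MB.f_cases[OF xu])
    case 1 then show ?thesis using I12 NB.f_I by auto
  next
    case 2 then show ?thesis using K12 NB.f_K kappa12 by auto
  next
    case 3 then show ?thesis using H12 NB.f_H e12 by auto
  next
    case 4 then show ?thesis using G12 NB.f_G spt12 by auto
  next
    case 5
    have x2: "x \<in> Gs2" using 5 Gs12 by blast
    have p: "pg1 x = pg2 x" using pg12 5 by blast
    have pK: "pg1 x \<in> K1" using Mx.pg_K 5 by blast
    have d: "MB.dG x \<in> G1" "actg1 (MB.dG x) (bx (pg1 x)) = x" using MB.dG_spec 5 by auto
    have "actg2 (MB.dG x) (bx (pg2 x)) = x" using d actg12 bx_M[OF pK] p by simp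
    then have dd: "NB.dG x = MB.dG x" using NB.dG_unique[OF x2] d(1) G12 by blast
    show ?thesis using 5 NB.f_Gs[OF x2] p dd spt12[OF d(1)] kappa12[OF pK] by simp
  next
    case 6
    have x2: "x \<in> Hs2" using 6 Hs12 by blast
    have p: "ph1 x = ph2 x" using ph12 6 by blast
    have pK: "ph1 x \<in> K1" using Mx.ph_K 6 by blast
    have d: "MB.dH x \<in> H1" "acth1 (MB.dH x) (by0 (ph1 x)) = x" using MB.dH_spec 6 by auto
    have "acth2 (MB.dH x) (by0 (ph2 x)) = x" using d acth12 by0_M[OF pK] p by simp
    then have dd: "NB.dH x = MB.dH x" using NB.dH_unique[OF x2] d(1) H12 by blast
    show ?thesis using 6 NB.f_Hs[OF x2] p dd e12 kappa12[OF pK] by simp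
  qed
qed

lemma main: "\<exists>f. iso f N (std n I2) \<and> (\<forall>i\<in>I2. f i = EI i) \<and> iso f M (std n I1)"
proof (intro exI conjI)
  show "iso NB.fmap N (std n I2)" by (rule NB.f_iso)
  show "\<forall>i\<in>I2. NB.fmap i = EI i" using NB.f_I by blast
  have m: "iso MB.fmap M (std n I1)" by (rule MB.f_iso)
  show "iso NB.fmap M (std n I1)"
    unfolding iso_def
  proof (intro conjI allI impI)
    have "bij_betw MB.fmap (univ M) (univ (std n I1))" using m unfolding iso_def by blast
    then show "bij_betw NB.fmap (univ M) (univ (std n I1))" using f12 bij_betw_cong by blast
  next
    fix r xs assume xs: "set xs \<subseteq> univ M"
    have meq: "map NB.fmap xs = map MB.fmap xs" using f12 xs by (intro map_cong) auto
    have "rel M r xs = rel (std n I1) r (map MB.fmap xs)" using m xs unfolding iso_def by blast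
    then show "rel M r xs = rel (std n I1) r (map NB.fmap xs)" unfolding meq .
  qed
qed

end

theorem lemma3p11:
  fixes n :: nat and M N :: "('a, hs_sym) rstr"
  assumes "3 \<le> n"
    and "in_Kn n M" and "in_Kn n N"
    and "elem_sub M N"
    and "le_aleph (n - 3) (univ M)" and "le_aleph (n - 3) (univ N)"
  shows "\<exists>f. iso f N (std n (sortset N SI)) \<and> (\<forall>i\<in>sortset N SI. f i = EI i)
             \<and> iso f M (std n (sortset M SI))"
proof -
  obtain z1 e1 hadd1 gadd1 ev1 actg1 acth1 pg1 ph1 where hM:
    "hsK n M (sortset M SI) (sortset M SK) (sortset M SH) (sortset M SG) (sortset M SGs) (sortset M SHs)
       (\<lambda>u. {i\<in>sortset M SI. rel M SMem [i, u]}) z1 e1 hadd1 gadd1 ev1 actg1 acth1 pg1 ph1"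
    using in_Kn_hsK[OF assms(2)] by blast
  obtain z2 e2 hadd2 gadd2 ev2 actg2 acth2 pg2 ph2 where hN:
    "hsK n N (sortset N SI) (sortset N SK) (sortset N SH) (sortset N SG) (sortset N SGs) (sortset N SHs)
       (\<lambda>u. {i\<in>sortset N SI. rel N SMem [i, u]}) z2 e2 hadd2 gadd2 ev2 actg2 acth2 pg2 ph2"
    using in_Kn_hsK[OF assms(3)] by blast
  obtain F :: "'a set \<Rightarrow> 'a set" where F: "\<forall>s. finite (F s)"
     "\<forall>w. w \<subseteq> univ N \<longrightarrow> finite w \<longrightarrow> card w = Suc (Suc (n - 3)) \<longrightarrow> (\<exists>x\<in>w. x \<in> F (w - {x}))"
    using kur[OF assms(6)] by blast
  have eq: "Suc (Suc (n - 3)) = n - 1" using assms(1) by simp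
  have F2: "\<forall>w. w \<subseteq> univ N \<longrightarrow> finite w \<longrightarrow> card w = n - 1 \<longrightarrow> (\<exists>x\<in>w. x \<in> F (w - {x}))"
    using F(2) unfolding eq .
  have "hsQ n M (sortset M SI) (sortset M SK) (sortset M SH) (sortset M SG) (sortset M SGs) (sortset M SHs)
       (\<lambda>u. {i\<in>sortset M SI. rel M SMem [i, u]}) z1 e1 hadd1 gadd1 ev1 actg1 acth1 pg1 ph1
       N (sortset N SI) (sortset N SK) (sortset N SH) (sortset N SG) (sortset N SGs) (sortset N SHs)
       (\<lambda>u. {i\<in>sortset N SI. rel N SMem [i, u]}) z2 e2 hadd2 gadd2 ev2 actg2 acth2 pg2 ph2 F"
    by (intro hsQ.intro hsP.intro hsP_axioms.intro hsQ_axioms.intro hM hN assms(4) F(1) F2 assms(1))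
  then show ?thesis by (rule hsQ.main)
qed


end
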